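(* Let $X$ be an admissible complete CAT(1) space, $f\colon X\to(-\infty,\infty]$ a proper lower semicontinuous convex function, and $R_f$ the resolvent of $f$. Then $\mathrm{Argmin}_X f$ is nonempty if and only if there exists $x\in X$ such that $\{R_f^nx\}$ is spherically bounded and $\sup_n d(R_f^nx,R_f^{n-1}x)<\pi/2$. In this case, $\{R_f^nx\}$ is $\Delta$-convergent to an element of $\mathrm{Argmin}_X f$ for each $x\in X$.
   Context: A CAT(1) space is a $\pi$-geodesic metric space in which every geodesic triangle of perimeter $<2\pi$ satisfies the CAT(1) comparison inequality relative to comparison triangles in $\mathbb S^2$; it is admissible if $d(v,v')<\pi/2$ for all $v,v'$ (hence uniquely geodesic). $f$ is proper if it takes a real value somewhere, convex if $f(\alpha x\oplus(1-\alpha)y)\le\alpha f(x)+(1-\alpha)f(y)$ for $x,y\in X$, $\alpha\in(0,1)$, where $\alpha x\oplus(1-\alpha)y$ is the point on the geodesic from $x$ to $y$ at distance $(1-\alpha)d(x,y)$ from $x$. The resolvent is $R_fx=\mathrm{Argmin}_{y\in X}\{f(y)+\tan d(y,x)\sin d(y,x)\}$, which is a well-defined single point for each $x$ (known fact). A sequence is spherically bounded if $\inf_{y}\limsup_n d(x_n,y)<\pi/2$. $\{x_n\}$ is $\Delta$-convergent to $p$ if for every subsequence $\{x_{n_i}\}$, $p$ is the unique minimizer of $z\mapsto\limsup_i d(x_{n_i},z)$. *)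

theory Defs
  imports "HOL-Analysis.Analysis" "HOL-Library.Extended_Real" "HOL-Library.Liminf_Limsup"
begin

definition geodesic :: "(real \<Rightarrow> 'a::metric_space) \<Rightarrow> 'a \<Rightarrow> 'a \<Rightarrow> bool" where
  "geodesic g x y \<longleftrightarrow> g 0 = x \<and> g (dist x y) = y \<and>
     (\<forall>s\<in>{0..dist x y}. \<forall>t\<in>{0..dist x y}. dist (g s) (g t) = \<bar>s - t\<bar>)"

definition S2 :: "(real^3) set" where
  "S2 = {u. norm u = 1}"

definition sdist :: "real^3 \<Rightarrow> real^3 \<Rightarrow> real" where
  "sdist u v = arccos (u \<bullet> v)"

text \<open>CAT(1) comparison inequality for a geodesic triangle with sides g1 (x to y), g2 (y to z),
  g3 (z to x): for every comparison triangle x', y', z' in S^2, and all points p, q of the triangle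
  with comparison points p', q' (same distances along the corresponding sides), d(p,q) \<le> d(p',q').\<close>
definition cat1_comparison ::
  "'a::metric_space \<Rightarrow> 'a \<Rightarrow> 'a \<Rightarrow> (real \<Rightarrow> 'a) \<Rightarrow> (real \<Rightarrow> 'a) \<Rightarrow> (real \<Rightarrow> 'a) \<Rightarrow> bool" where
  "cat1_comparison x y z g1 g2 g3 \<longleftrightarrow>
    (\<forall>x' y' z'. x' \<in> S2 \<and> y' \<in> S2 \<and> z' \<in> S2 \<and>
       sdist x' y' = dist x y \<and> sdist y' z' = dist y z \<and> sdist z' x' = dist z x \<longrightarrow>
       (\<forall>(g, a', b') \<in> {(g1, x', y'), (g2, y', z'), (g3, z', x')}.
        \<forall>(h, c', d') \<in> {(g1, x', y'), (g2, y', z'), (g3, z', x')}.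
        \<forall>s \<in> {0..sdist a' b'}. \<forall>t \<in> {0..sdist c' d'}. \<forall>p' \<in> S2. \<forall>q' \<in> S2.
          sdist a' p' = s \<and> sdist p' b' = sdist a' b' - s \<and>
          sdist c' q' = t \<and> sdist q' d' = sdist c' d' - t \<longrightarrow>
          dist (g s) (h t) \<le> sdist p' q'))"

definition CAT1_space :: "'a::metric_space itself \<Rightarrow> bool" where
  "CAT1_space _ \<longleftrightarrow>
    (\<forall>x y::'a. dist x y < pi \<longrightarrow> (\<exists>g. geodesic g x y)) \<and>
    (\<forall>(x::'a) y z g1 g2 g3. geodesic g1 x y \<and> geodesic g2 y z \<and> geodesic g3 z x \<and>
        dist x y + dist y z + dist z x < 2 * pi \<longrightarrow> cat1_comparison x y z g1 g2 g3)"

definition admissible :: "'a::metric_space itself \<Rightarrow> bool" where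
  "admissible _ \<longleftrightarrow> (\<forall>v v'::'a. dist v v' < pi / 2)"

definition proper_fun :: "('a \<Rightarrow> ereal) \<Rightarrow> bool" where
  "proper_fun f \<longleftrightarrow> (\<exists>x. f x \<noteq> \<infinity> \<and> f x \<noteq> -\<infinity>)"

definition lsc :: "('a::metric_space \<Rightarrow> ereal) \<Rightarrow> bool" where
  "lsc f \<longleftrightarrow> (\<forall>x s. s \<longlonglongrightarrow> x \<longrightarrow> f x \<le> liminf (\<lambda>n. f (s n)))"

text \<open>Convexity along geodesics: alpha x + (1-alpha) y is the point on the geodesic from x to y
  at distance (1-alpha) d(x,y) from x.\<close>
definition geod_convex :: "('a::metric_space \<Rightarrow> ereal) \<Rightarrow> bool" where
  "geod_convex f \<longleftrightarrow> (\<forall>x y g \<alpha>. geodesic g x y \<and> 0 < \<alpha> \<and> \<alpha> < 1 \<longrightarrow>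
      f (g ((1 - \<alpha>) * dist x y)) \<le> ereal \<alpha> * f x + ereal (1 - \<alpha>) * f y)"

definition Argmin :: "('a \<Rightarrow> ereal) \<Rightarrow> 'a set" where
  "Argmin f = {y. \<forall>z. f y \<le> f z}"

definition resolvent :: "('a::metric_space \<Rightarrow> ereal) \<Rightarrow> 'a \<Rightarrow> 'a" where
  "resolvent f x = (THE y. y \<in> Argmin (\<lambda>y. f y + ereal (tan (dist y x) * sin (dist y x))))"

definition spherically_bounded :: "(nat \<Rightarrow> 'a::metric_space) \<Rightarrow> bool" where
  "spherically_bounded xs \<longleftrightarrow> (INF y. limsup (\<lambda>n. ereal (dist (xs n) y))) < ereal (pi / 2)"

definition Delta_convergent :: "(nat \<Rightarrow> 'a::metric_space) \<Rightarrow> 'a \<Rightarrow> bool" where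
  "Delta_convergent xs p \<longleftrightarrow> (\<forall>r. strict_mono r \<longrightarrow>
     (\<forall>z. z \<noteq> p \<longrightarrow> limsup (\<lambda>i. ereal (dist (xs (r i)) p)) < limsup (\<lambda>i. ereal (dist (xs (r i)) z))))"

end

theory Submission
  imports Defs
begin


lemma inner3: "(vector [a1,a2,a3] :: real^3) \<bullet> vector [b1,b2,b3] = a1*b1 + a2*b2 + a3*b3"
  by (simp add: inner_vec_def sum_3)

lemma S2_iff: "u \<in> S2 \<longleftrightarrow> u \<bullet> u = 1"
  by (simp add: S2_def norm_eq_sqrt_inner)

lemma comp_tri:
  fixes D a b :: real
  assumes "0 < D" "D < pi/2" "0 \<le> a" "a < pi/2" "0 \<le> b" "b < pi/2"
    "a \<le> D + b" "D \<le> a + b" "b \<le> a + D"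
  shows "\<exists>x' y' z'. x' \<in> S2 \<and> y' \<in> S2 \<and> z' \<in> S2 \<and> x' \<bullet> y' = cos D \<and> y' \<bullet> z' = cos a \<and> z' \<bullet> x' = cos b"
proof -
  have sD: "sin D > 0" using assms by (intro sin_gt_zero) auto
  define u where "u = (cos a - cos b * cos D) / sin D"
  have c1: "cos a \<ge> cos (b + D)"
    using assms by (intro cos_monotone_0_pi_le) auto
  have c2: "cos a \<le> cos (b - D)"
  proof (cases "b \<ge> D")
    case True then show ?thesis using assms by (intro cos_monotone_0_pi_le) auto
  next
    case False
    have "cos (b - D) = cos (D - b)" by (metis cos_minus minus_diff_eq)
    moreover have "cos a \<le> cos (D - b)" using assms False by (intro cos_monotone_0_pi_le) auto
    ultimately show ?thesis by simp
  qed
  have sb: "sin b \<ge> 0" using assms by (intro sin_ge_zero) auto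
  have "\<bar>u\<bar> \<le> sin b"
  proof -
    have "\<bar>cos a - cos b * cos D\<bar> \<le> sin b * sin D"
      using c1 c2 unfolding cos_add cos_diff abs_le_iff by linarith
    moreover have "\<bar>u\<bar> = \<bar>cos a - cos b * cos D\<bar> / sin D"
      using sD by (simp add: u_def abs_divide)
    ultimately show ?thesis using sD by (simp add: pos_divide_le_eq mult.commute)
  qed
  then have uu: "u^2 \<le> (sin b)^2" by (metis abs_le_square_iff abs_of_nonneg sb)
  define w where "w = sqrt (1 - (cos b)^2 - u^2)"
  have w2: "w^2 = 1 - (cos b)^2 - u^2"
    unfolding w_def using uu sin_cos_squared_add[of b] by (intro real_sqrt_pow2) linarith
  define x' :: "real^3" where "x' = vector [1,0,0]"
  define y' :: "real^3" where "y' = vector [cos D, sin D, 0]"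
  define z' :: "real^3" where "z' = vector [cos b, u, w]"
  have "x' \<in> S2" by (simp add: S2_iff x'_def inner3)
  moreover have "y' \<in> S2" using sin_cos_squared_add[of D]
    by (simp add: S2_iff y'_def inner3 power2_eq_square)
  moreover have "z' \<in> S2"
  proof -
    have "z' \<bullet> z' = (cos b)^2 + u^2 + w^2" by (simp add: z'_def inner3 power2_eq_square)
    then show ?thesis using w2 by (simp add: S2_iff)
  qed
  moreover have "x' \<bullet> y' = cos D" by (simp add: x'_def y'_def inner3)
  moreover have "y' \<bullet> z' = cos a"
  proof -
    have "sin D * u = cos a - cos b * cos D" using sD by (simp add: u_def)
    then show ?thesis by (simp add: y'_def z'_def inner3)
  qed
  moreover have "z' \<bullet> x' = cos b" by (simp add: x'_def z'_def inner3)
  ultimately show ?thesis by blast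
qed

lemma half_pi_le: "t < pi/2 \<Longrightarrow> t \<le> pi" using pi_gt_zero by linarith
lemma half_pi_lt: "t < pi/2 \<Longrightarrow> t < pi" using pi_gt_zero by linarith

locale ctx =
  fixes f :: "'a::metric_space \<Rightarrow> ereal"
  assumes cat: "CAT1_space TYPE('a)" and adm: "admissible TYPE('a)" and cpl: "complete (UNIV :: 'a set)"
    and nminf: "\<forall>x. f x \<noteq> -\<infinity>" and prp: "proper_fun f" and lsc: "lsc f" and cvx: "geod_convex f"
begin

lemma dlt: fixes x y :: 'a shows "dist x y < pi/2"
  using adm unfolding admissible_def by blast

lemma cpos: fixes x y :: 'a shows "cos (dist x y) > 0"
  using dlt[of x y] zero_le_dist[of x y] pi_gt_zero by (intro cos_gt_zero_pi) linarith+


lemma geod_ex: fixes x y :: 'a shows "\<exists>g. geodesic g x y"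
proof -
  have "dist x y < pi" using half_pi_lt[OF dlt[of x y]] .
  then show ?thesis using cat unfolding CAT1_space_def by blast
qed

lemma geod_dist:
  assumes "geodesic (g::real\<Rightarrow>'a) x y" "0 \<le> s" "s \<le> dist x y"
  shows "dist x (g s) = s" "dist (g s) y = dist x y - s"
proof -
  have g0: "g 0 = x" and g1: "g (dist x y) = y"
    and H: "\<forall>s\<in>{0..dist x y}. \<forall>t\<in>{0..dist x y}. dist (g s) (g t) = \<bar>s - t\<bar>"
    using assms(1) unfolding geodesic_def by auto
  have "dist (g 0) (g s) = \<bar>0 - s\<bar>" using H assms by auto
  then show "dist x (g s) = s" using g0 assms by simp
  have "dist (g s) (g (dist x y)) = \<bar>s - dist x y\<bar>" using H assms by auto
  then show "dist (g s) y = dist x y - s" using g1 assms by simp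
qed

lemma factA:
  fixes x y z :: 'a
  assumes g: "geodesic g x y" and D: "0 < dist x y" and s: "0 \<le> s" "s \<le> dist x y"
  shows "sin (dist x y - s) * cos (dist x z) + sin s * cos (dist y z) \<le> cos (dist (g s) z) * sin (dist x y)"
proof -
  define D where "D = dist x y"
  obtain g2 where g2: "geodesic g2 y z" using geod_ex by blast
  obtain g3 where g3: "geodesic g3 z x" using geod_ex by blast
  have per: "dist x y + dist y z + dist z x < 2 * pi"
    using dlt[of x y] dlt[of y z] dlt[of z x] pi_gt_zero by linarith
  have cc: "cat1_comparison x y z g g2 g3"
    using cat g g2 g3 per unfolding CAT1_space_def by blast
  obtain x' y' z' where S: "x' \<in> S2" "y' \<in> S2" "z' \<in> S2" and
     i1: "x' \<bullet> y' = cos D" and i2: "y' \<bullet> z' = cos (dist y z)" and i3: "z' \<bullet> x' = cos (dist z x)"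
    using comp_tri[of D "dist y z" "dist z x"] D dlt[of x y] dlt[of y z] dlt[of z x]
      dist_triangle[of y z x] dist_triangle[of x y z] dist_triangle[of z x y]
    unfolding D_def by (auto simp: dist_commute)
  have sD: "sin D > 0" using D half_pi_lt[OF dlt[of x y]] unfolding D_def by (intro sin_gt_zero) auto
  define \<alpha> where "\<alpha> = sin (D - s) / sin D"
  define \<beta> where "\<beta> = sin s / sin D"
  define p' where "p' = \<alpha> *\<^sub>R x' + \<beta> *\<^sub>R y'"
  have xx: "x' \<bullet> x' = 1" "y' \<bullet> y' = 1" "z' \<bullet> z' = 1" using S by (auto simp: S2_iff)
  have id1: "sin (D - s) + sin s * cos D = sin D * cos s"
    by (simp add: sin_diff algebra_simps)
  have id2: "sin (D - s) * cos D + sin s = sin D * cos (D - s)"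
  proof -
    have "sin s = sin (D - (D - s))" by simp
    also have "\<dots> = sin D * cos (D - s) - cos D * sin (D - s)" by (rule sin_diff)
    finally show ?thesis by simp
  qed
  have id3: "(sin (D - s))^2 + (sin s)^2 + 2 * sin (D - s) * sin s * cos D = (sin D)^2"
  proof -
    have "(sin D)^2 = sin D * (sin (D - s) * cos s + cos (D - s) * sin s)"
      by (metis power2_eq_square sin_add diff_add_cancel)
    also have "\<dots> = sin (D - s) * (sin D * cos s) + sin s * (sin D * cos (D - s))" by (simp add: algebra_simps)
    also have "\<dots> = sin (D - s) * (sin (D - s) + sin s * cos D) + sin s * (sin (D - s) * cos D + sin s)"
      by (simp add: id1 id2)
    finally show ?thesis by (simp add: algebra_simps power2_eq_square)
  qed
  have pp: "p' \<bullet> p' = 1"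
  proof -
    have "p' \<bullet> p' = \<alpha>^2 + \<beta>^2 + 2 * \<alpha> * \<beta> * cos D"
      using xx i1 by (simp add: p'_def inner_add_left inner_add_right inner_commute power2_eq_square algebra_simps)
    also have "\<dots> = ((sin (D - s))^2 + (sin s)^2 + 2 * sin (D - s) * sin s * cos D) / (sin D)^2"
      using sD by (simp add: \<alpha>_def \<beta>_def field_simps power2_eq_square)
    also have "\<dots> = 1" using id3 sD by simp
    finally show ?thesis .
  qed
  have xp: "x' \<bullet> p' = cos s"
  proof -
    have "x' \<bullet> p' = \<alpha> + \<beta> * cos D" using xx i1 by (simp add: p'_def inner_add_right)
    also have "\<dots> = (sin (D - s) + sin s * cos D) / sin D" by (simp add: \<alpha>_def \<beta>_def add_divide_distrib)
    also have "\<dots> = cos s" using id1 sD by simp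
    finally show ?thesis .
  qed
  have py: "p' \<bullet> y' = cos (D - s)"
  proof -
    have "p' \<bullet> y' = \<alpha> * cos D + \<beta>" using xx i1 by (simp add: p'_def inner_add_left)
    also have "\<dots> = (sin (D - s) * cos D + sin s) / sin D" by (simp add: \<alpha>_def \<beta>_def add_divide_distrib)
    also have "\<dots> = cos (D - s)" using id2 sD by simp
    finally show ?thesis .
  qed
  have pz: "p' \<bullet> z' = (sin (D - s) * cos (dist x z) + sin s * cos (dist y z)) / sin D"
  proof -
    have "p' \<bullet> z' = \<alpha> * (x' \<bullet> z') + \<beta> * (y' \<bullet> z')" by (simp add: p'_def inner_add_left)
    also have "\<dots> = \<alpha> * cos (dist x z) + \<beta> * cos (dist y z)" using i2 i3 by (simp add: inner_commute dist_commute)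
    finally show ?thesis by (simp add: \<alpha>_def \<beta>_def add_divide_distrib)
  qed
  have pi2: "pi/2 < pi" using pi_gt_zero by linarith
  have Ds: "D - s \<le> pi" "s \<le> pi" using s dlt[of x y] pi2 unfolding D_def by auto
  have sd1: "sdist x' y' = D" using i1 arccos_cos[OF zero_le_dist half_pi_le[OF dlt[of x y]]] unfolding D_def sdist_def by simp
  have sd2: "sdist y' z' = dist y z" using i2 arccos_cos[OF zero_le_dist half_pi_le[OF dlt[of y z]]] unfolding sdist_def by simp
  have sd3: "sdist z' x' = dist z x" using i3 arccos_cos[OF zero_le_dist half_pi_le[OF dlt[of z x]]] unfolding sdist_def by simp
  have sxp: "sdist x' p' = s" using xp arccos_cos[OF s(1) Ds(2)] unfolding sdist_def by simp
  have spy: "sdist p' y' = sdist x' y' - s" using py arccos_cos[of "D - s"] s Ds sd1 unfolding sdist_def D_def by simp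
  have szz: "sdist z' z' = 0" using xx unfolding sdist_def by simp
  have H: "dist (g s) (g3 0) \<le> sdist p' z'"
    using cc S sd1 sd2 sd3 s unfolding cat1_comparison_def D_def[symmetric]
    apply -
    apply (drule spec[of _ x'], drule spec[of _ y'], drule spec[of _ z'])
    apply (drule mp, simp)
    apply (drule bspec[of _ _ "(g, x', y')"], simp)
    apply (simp only: prod.case)
    apply (drule bspec[of _ _ "(g3, z', x')"], simp)
    apply (simp only: prod.case)
    apply (drule bspec[of _ _ s], simp)
    apply (drule bspec[of _ _ 0], simp)
    apply (drule bspec[of _ _ p'], simp add: S2_iff pp)
    apply (drule bspec[of _ _ z'], simp add: S)
    using sxp spy szz by simp
  have g30: "g3 0 = z" using g3 unfolding geodesic_def by simp
  have pzb: "\<bar>p' \<bullet> z'\<bar> \<le> 1"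
    using Cauchy_Schwarz_ineq2[of p' z'] pp xx by (simp add: norm_eq_sqrt_inner)
  have "dist (g s) z \<le> arccos (p' \<bullet> z')" using H g30 unfolding sdist_def by simp
  then have "cos (arccos (p' \<bullet> z')) \<le> cos (dist (g s) z)"
    using pzb by (intro cos_monotone_0_pi_le) (auto intro: arccos_lbound arccos_ubound)
  then have "p' \<bullet> z' \<le> cos (dist (g s) z)" using pzb by (simp add: cos_arccos_abs)
  then show ?thesis using pz sD unfolding D_def by (simp add: divide_le_eq mult.commute)
qed

end



lemma cos_lip: "\<bar>cos a - cos b\<bar> \<le> \<bar>a - b\<bar>" for a b :: real
proof -
  have "\<bar>cos a - cos b\<bar> = 2 * \<bar>sin ((a + b) / 2)\<bar> * \<bar>sin ((b - a) / 2)\<bar>"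
    by (simp add: cos_diff_cos abs_mult)
  also have "\<dots> \<le> 2 * 1 * \<bar>(b - a) / 2\<bar>"
    by (intro mult_mono abs_sin_x_le_abs_x) auto
  finally show ?thesis by simp
qed

definition Q :: "real \<Rightarrow> real" where "Q c = 1 / c - c"

lemma Q_anti: assumes "0 < c1" "c1 \<le> c2" shows "Q c2 \<le> Q c1"
proof -
  have "1 / c2 \<le> 1 / c1" using assms by (simp add: frac_le)
  then show ?thesis unfolding Q_def using assms by linarith
qed

lemma Q_nonneg: assumes "0 < c" "c \<le> 1" shows "0 \<le> Q c"
proof -
  have "c * c \<le> 1 * 1" using assms by (intro mult_mono) auto
  then show ?thesis unfolding Q_def using assms by (simp add: field_simps)
qed

lemma Qmid:
  assumes "0 < c1" "c1 \<le> 1" "0 < c2" "c2 \<le> 1" "0 < k" "k \<le> 1"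
  shows "Q ((c1 + c2) / (2 * k)) \<le> (Q c1 + Q c2) / 2 - (1 - k)"
proof -
  define c where "c = (c1 + c2) / 2"
  have c: "0 < c" "c \<le> 1" using assms unfolding c_def by auto
  have hm: "1 / c \<le> (1 / c1 + 1 / c2) / 2"
  proof -
    have "4 * (c1 * c2) \<le> (c1 + c2) * (c1 + c2)"
      using sum_squares_ge_zero[of "c1 - c2" 0] by (simp add: algebra_simps power2_eq_square)
    then show ?thesis using assms unfolding c_def by (simp add: field_simps)
  qed
  have "Q ((c1 + c2) / (2 * k)) = k / c - c / k" unfolding Q_def c_def using assms by (simp add: field_simps)
  also have "\<dots> \<le> 1 / c - c - (1 - k)"
  proof -
    have "0 \<le> (1 - k) * (1 / c - 1)" using c assms by (intro mult_nonneg_nonneg) (auto simp: field_simps)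
    moreover have "0 \<le> c * (1 / k - 1)" using c assms by (intro mult_nonneg_nonneg) (auto simp: field_simps)
    moreover have "1 / c - c - (1 - k) - (k / c - c / k) = (1 - k) * (1 / c - 1) + c * (1 / k - 1)"
      using c assms by (simp add: field_simps)
    ultimately show ?thesis by linarith
  qed
  also have "\<dots> \<le> (Q c1 + Q c2) / 2 - (1 - k)"
  proof -
    have "(Q c1 + Q c2) / 2 = (1 / c1 + 1 / c2) / 2 - c" unfolding Q_def c_def by (simp add: field_simps)
    then show ?thesis using hm by linarith
  qed
  finally show ?thesis .
qed

lemma cauchy_cos:
  fixes z :: "nat \<Rightarrow> 'a::metric_space"
  assumes bd: "\<And>j k. dist (z j) (z k) < pi/2"
    and H: "\<And>j k. 1 - cos (dist (z j) (z k) / 2) \<le> b j + b k" and b: "b \<longlonglongrightarrow> 0"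
  shows "Cauchy z"
  unfolding Cauchy_def
proof (intro allI impI)
  fix e :: real assume e: "0 < e"
  define e' where "e' = min e 1"
  have e': "0 < e'" "e' \<le> e" "e' \<le> 1" using e by (auto simp: e'_def)
  define \<delta> where "\<delta> = 1 - cos (e' / 2)"
  have "cos (e' / 2) < cos 0" using e' pi_gt3 by (intro cos_monotone_0_pi) auto
  then have \<delta>: "0 < \<delta>" unfolding \<delta>_def by simp
  have "eventually (\<lambda>j. b j < \<delta> / 2) sequentially"
    using b \<delta> by (intro order_tendstoD) auto
  then obtain M where M: "\<And>j. j \<ge> M \<Longrightarrow> b j < \<delta> / 2" by (auto simp: eventually_sequentially)
  show "\<exists>M. \<forall>m\<ge>M. \<forall>n\<ge>M. dist (z m) (z n) < e"
  proof (intro exI allI impI)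
    fix m n assume mn: "M \<le> m" "M \<le> n"
    show "dist (z m) (z n) < e"
    proof (rule ccontr)
      assume "\<not> ?thesis"
      then have ge: "e' \<le> dist (z m) (z n)" using e' by linarith
      have "cos (dist (z m) (z n) / 2) \<le> cos (e' / 2)"
        using ge e' bd[of m n] pi_gt3 by (intro cos_monotone_0_pi_le) auto
      then have "\<delta> \<le> b m + b n" using H[of m n] unfolding \<delta>_def by linarith
      moreover have "b m + b n < \<delta>" using M[OF mn(1)] M[OF mn(2)] by linarith
      ultimately show False by linarith
    qed
  qed
qed

context ctx begin

definition psi :: "'a \<Rightarrow> 'a \<Rightarrow> real" where "psi x y = tan (dist y x) * sin (dist y x)"

lemma psi_Q: "psi x y = Q (cos (dist y x))"
proof -
  have c: "cos (dist y x) \<noteq> 0" using cpos[of y x] by simp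
  show ?thesis unfolding psi_def Q_def tan_def using c sin_cos_squared_add[of "dist y x"]
    by (simp add: field_simps power2_eq_square)
qed

lemma psi_nonneg: "0 \<le> psi x y"
  unfolding psi_Q using cpos[of y x] by (intro Q_nonneg) auto

lemma psi_self: "psi x x = 0" unfolding psi_def by simp

lemma fin_eq: "f y \<noteq> \<infinity> \<Longrightarrow> f y = ereal (real_of_ereal (f y))"
  using nminf by (cases "f y") auto

lemma cvx':
  assumes "geodesic g x y" "0 < t" "t < 1"
  shows "f (g (t * dist x y)) \<le> ereal (1 - t) * f x + ereal t * f y"
proof -
  have "f (g ((1 - (1 - t)) * dist x y)) \<le> ereal (1 - t) * f x + ereal (1 - (1 - t)) * f y"
    using cvx assms unfolding geod_convex_def by (meson diff_gt_0_iff_gt diff_less_eq less_add_same_cancel1)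
  then show ?thesis by simp
qed

lemma lsc_le:
  assumes "s \<longlonglongrightarrow> x" "eventually (\<lambda>n. f (s n) \<le> c) sequentially"
  shows "f x \<le> c"
proof -
  have "f x \<le> liminf (\<lambda>n. f (s n))" using lsc assms(1) unfolding lsc_def by blast
  also have "\<dots> \<le> c" using assms(2) by (intro Liminf_le) auto
  finally show ?thesis .
qed

end

context ctx begin

lemma midA:
  fixes x y z :: 'a
  assumes g: "geodesic g x y" and D: "0 < dist x y"
  shows "cos (dist x z) + cos (dist y z) \<le> 2 * cos (dist x y / 2) * cos (dist (g (dist x y / 2)) z)"
proof -
  define D where "D = dist x y"
  have "sin (D - D/2) * cos (dist x z) + sin (D/2) * cos (dist y z) \<le> cos (dist (g (D/2)) z) * sin D"
  proof -
    have "D/2 \<le> D" "0 \<le> D/2" using D unfolding D_def by auto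
    moreover have "dist x y < pi * 2" using half_pi_lt[OF dlt[of x y]] pi_gt_zero by linarith
    ultimately show ?thesis using factA[OF g D, of "D/2" z] unfolding D_def by simp
  qed
  moreover have "sin D = 2 * sin (D/2) * cos (D/2)" using sin_double[of "D/2"] by simp
  moreover have "sin (D/2) > 0"
  proof -
    have "D/2 < pi" using half_pi_lt[OF dlt[of x y]] pi_gt_zero unfolding D_def by linarith
    then show ?thesis using D unfolding D_def by (intro sin_gt_zero) auto
  qed
  ultimately have "sin (D/2) * (cos (dist x z) + cos (dist y z)) \<le> sin (D/2) * (2 * cos (D/2) * cos (dist (g (D/2)) z))"
    by (simp add: algebra_simps)
  then show ?thesis using \<open>sin (D/2) > 0\<close> unfolding D_def by simp
qed

lemma fbdd: "\<exists>M. \<forall>y. ereal M \<le> f y"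
proof (rule ccontr)
  assume nb: "\<not> ?thesis"
  obtain x0 where x0: "f x0 \<noteq> \<infinity>" "f x0 \<noteq> -\<infinity>" using prp unfolding proper_fun_def by blast
  define F0 where "F0 = real_of_ereal (f x0)"
  have fx0: "f x0 = ereal F0" using x0 unfolding F0_def by (cases "f x0") auto
  define t :: "nat \<Rightarrow> real" where "t k = (1/2) ^ Suc k" for k
  have t: "0 < t k" "t k < 1" for k
  proof -
    show "0 < t k" unfolding t_def by simp
    have "(1/2::real)^k \<le> 1" by (rule power_le_one) auto
    then show "t k < 1" unfolding t_def by simp
  qed
  have "\<forall>k. \<exists>y. f y < ereal (- real k / t k)"
    using nb by (meson not_le)
  then obtain y where y: "\<And>k. f (y k) < ereal (- real k / t k)" by metis
  have "\<forall>k. \<exists>g. geodesic g x0 (y k)" using geod_ex by blast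
  then obtain g where g: "\<And>k. geodesic (g k) x0 (y k)" by metis
  define z where "z k = g k (t k * dist x0 (y k))" for k
  have fz: "f (z k) \<le> ereal (\<bar>F0\<bar> - real k)" for k
  proof -
    have c: "f (z k) \<le> ereal (1 - t k) * f x0 + ereal (t k) * f (y k)"
      unfolding z_def by (rule cvx'[OF g t])
    have yf: "f (y k) \<noteq> \<infinity>" using y[of k] by auto
    define Y where "Y = real_of_ereal (f (y k))"
    have fy: "f (y k) = ereal Y" using yf nminf unfolding Y_def by (cases "f (y k)") auto
    have Yb: "Y < - real k / t k" using y[of k] fy by simp
    have "t k * Y < t k * (- real k / t k)" using Yb t[of k] by (intro mult_strict_left_mono) auto
    then have a: "t k * Y < - real k" using t[of k] by simp
    have "(1 - t k) * F0 \<le> (1 - t k) * \<bar>F0\<bar>" using t[of k] by (intro mult_left_mono) auto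
    also have "\<dots> \<le> \<bar>F0\<bar>" using t[of k] by (simp add: mult_left_le_one_le)
    finally have "(1 - t k) * F0 + t k * Y \<le> \<bar>F0\<bar> - real k" using a by linarith
    moreover have "f (z k) \<le> ereal ((1 - t k) * F0 + t k * Y)" using c fx0 fy by simp
    ultimately show ?thesis by (meson ereal_less_eq(3) order_trans)
  qed
  have zt: "z \<longlonglongrightarrow> x0"
  proof -
    have d: "dist (z k) x0 \<le> (pi / 2) * t k" for k
    proof -
      have le: "t k * dist x0 (y k) \<le> dist x0 (y k)" using t[of k] by (simp add: mult_left_le_one_le)
      have "dist (z k) x0 = t k * dist x0 (y k)"
        using geod_dist(1)[OF g[of k] _ le] t[of k] by (simp add: z_def dist_commute)
      also have "\<dots> \<le> t k * (pi / 2)" using dlt[of x0 "y k"] t[of k] by (intro mult_left_mono) auto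
      finally show ?thesis by (simp add: mult.commute)
    qed
    have "(\<lambda>k. (1/2::real) ^ k) \<longlonglongrightarrow> 0" by (rule LIMSEQ_power_zero) simp
    then have "t \<longlonglongrightarrow> 0" unfolding t_def by (rule LIMSEQ_Suc)
    then have "(\<lambda>k. (pi / 2) * t k) \<longlonglongrightarrow> 0" by (rule tendsto_mult_right_zero)
    moreover have "eventually (\<lambda>k. norm (dist (z k) x0) \<le> (pi / 2) * t k) sequentially"
      using d by simp
    ultimately have "(\<lambda>k. dist (z k) x0) \<longlonglongrightarrow> 0"
      by (rule Lim_null_comparison[rotated])
    then show ?thesis by (rule tendsto_dist_iff[THEN iffD2])
  qed
  have "eventually (\<lambda>k. f (z k) \<le> ereal (F0 - 1)) sequentially"
  proof -
    obtain N :: nat where N: "\<bar>F0\<bar> - (F0 - 1) \<le> real N" using real_arch_simple by blast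
    show ?thesis unfolding eventually_sequentially
    proof (intro exI allI impI)
      fix k assume "N \<le> k"
      then have "\<bar>F0\<bar> - real k \<le> F0 - 1" using N by linarith
      then show "f (z k) \<le> ereal (F0 - 1)" using fz[of k] order_trans by fastforce
    qed
  qed
  then have "f x0 \<le> ereal (F0 - 1)" by (rule lsc_le[OF zt])
  then show False using fx0 by simp
qed

end

context ctx begin

lemma kappa:
  fixes y1 y2 :: 'a
  shows "0 < cos (dist y1 y2 / 2)" "cos (dist y1 y2 / 2) \<le> 1"
    "y1 \<noteq> y2 \<Longrightarrow> cos (dist y1 y2 / 2) < 1"
proof -
  have d: "0 \<le> dist y1 y2 / 2" "dist y1 y2 / 2 < pi / 2" using dlt[of y1 y2] pi_gt_zero zero_le_dist[of y1 y2] by linarith+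
  show "0 < cos (dist y1 y2 / 2)" using d pi_gt_zero by (intro cos_gt_zero_pi) linarith+
  show "cos (dist y1 y2 / 2) \<le> 1" by simp
  assume "y1 \<noteq> y2"
  then have "0 < dist y1 y2 / 2" by simp
  then have "cos (dist y1 y2 / 2) < cos 0" using d pi_gt_zero by (intro cos_monotone_0_pi) linarith+
  then show "cos (dist y1 y2 / 2) < 1" by simp
qed

lemma Hmid:
  fixes x y1 y2 :: 'a
  assumes f1: "f y1 \<noteq> \<infinity>" and f2: "f y2 \<noteq> \<infinity>" and ne: "y1 \<noteq> y2" and g: "geodesic g y1 y2"
  shows "f (g (dist y1 y2 / 2)) + ereal (psi x (g (dist y1 y2 / 2)))
    \<le> ereal ((real_of_ereal (f y1) + psi x y1 + real_of_ereal (f y2) + psi x y2) / 2 - (1 - cos (dist y1 y2 / 2)))"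
proof -
  define D where "D = dist y1 y2"
  define m where "m = g (D / 2)"
  define F1 where "F1 = real_of_ereal (f y1)"
  define F2 where "F2 = real_of_ereal (f y2)"
  have e1: "f y1 = ereal F1" using fin_eq[OF f1] unfolding F1_def .
  have e2: "f y2 = ereal F2" using fin_eq[OF f2] unfolding F2_def .
  have "f (g ((1/2) * D)) \<le> ereal (1 - 1/2) * f y1 + ereal (1/2) * f y2"
    unfolding D_def by (rule cvx'[OF g]) auto
  then have fm: "f m \<le> ereal ((F1 + F2) / 2)" unfolding m_def using e1 e2 by (simp add: add_divide_distrib)
  define c1 where "c1 = cos (dist y1 x)"
  define c2 where "c2 = cos (dist y2 x)"
  define k where "k = cos (D / 2)"
  have c: "0 < c1" "c1 \<le> 1" "0 < c2" "c2 \<le> 1" unfolding c1_def c2_def using cpos by auto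
  have k: "0 < k" "k \<le> 1" unfolding k_def D_def using kappa by auto
  have Dp: "0 < D" using ne unfolding D_def by simp
  have "c1 + c2 \<le> 2 * k * cos (dist m x)"
    using midA[OF g, of x] Dp unfolding c1_def c2_def k_def m_def D_def by simp
  then have L: "(c1 + c2) / (2 * k) \<le> cos (dist m x)" using k by (simp add: divide_le_eq mult.commute)
  have "psi x m = Q (cos (dist m x))" by (rule psi_Q)
  also have "\<dots> \<le> Q ((c1 + c2) / (2 * k))" using L c k by (intro Q_anti) auto
  also have "\<dots> \<le> (Q c1 + Q c2) / 2 - (1 - k)" using c k by (intro Qmid) auto
  finally have pm: "psi x m \<le> (psi x y1 + psi x y2) / 2 - (1 - k)"
    unfolding c1_def c2_def psi_Q .
  have "f m + ereal (psi x m) \<le> ereal ((F1 + F2) / 2) + ereal ((psi x y1 + psi x y2) / 2 - (1 - k))"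
    using fm pm by (intro add_mono) auto
  also have "\<dots> = ereal ((F1 + psi x y1 + F2 + psi x y2) / 2 - (1 - k))" by (simp add: field_simps)
  finally show ?thesis unfolding m_def F1_def F2_def k_def D_def .
qed

end

lemma key_lin: assumes "(m::real) \<le> (hj + hk) / 2 - (1 - c)" "hj < m + A" "hk < m + B" shows "1 - c \<le> A / 2 + B / 2"
  using assms by argo

context ctx begin

definition Hx :: "'a \<Rightarrow> 'a \<Rightarrow> ereal" where "Hx x y = f y + ereal (psi x y)"

lemma Hx_fin: "Hx x y \<noteq> \<infinity> \<longleftrightarrow> f y \<noteq> \<infinity>"
  unfolding Hx_def by auto

lemma Hx_eq: "f y \<noteq> \<infinity> \<Longrightarrow> Hx x y = ereal (real_of_ereal (f y) + psi x y)"
  unfolding Hx_def by (subst fin_eq) auto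

lemma psi_cont: "(\<lambda>k. psi x (y k)) \<longlonglongrightarrow> psi x p" if "y \<longlonglongrightarrow> p" for y :: "nat \<Rightarrow> 'a"
proof -
  have "(\<lambda>k. dist (y k) x) \<longlonglongrightarrow> dist p x" by (rule tendsto_dist[OF that tendsto_const])
  then have cc: "(\<lambda>k. cos (dist (y k) x)) \<longlonglongrightarrow> cos (dist p x)" by (rule tendsto_cos)
  have nz: "cos (dist p x) \<noteq> 0" using cpos[of p x] by simp
  have "(\<lambda>k. 1 / cos (dist (y k) x) - cos (dist (y k) x)) \<longlonglongrightarrow> 1 / cos (dist p x) - cos (dist p x)"
    by (rule tendsto_diff[OF tendsto_divide[OF tendsto_const cc nz] cc])
  then show ?thesis unfolding psi_Q Q_def .
qed

lemma res_ex1: "\<exists>!y. \<forall>z. Hx x y \<le> Hx x z"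
proof -
  obtain M where M: "\<And>y. ereal M \<le> f y" using fbdd by blast
  obtain x0 where x0: "f x0 \<noteq> \<infinity>" using prp unfolding proper_fun_def by blast
  define \<mu> where "\<mu> = (INF y. Hx x y)"
  have HM: "ereal M \<le> Hx x y" for y
  proof -
    have "ereal M + 0 \<le> f y + ereal (psi x y)" using M[of y] psi_nonneg[of x y] by (intro add_mono) auto
    then show ?thesis unfolding Hx_def by simp
  qed
  have mu1: "ereal M \<le> \<mu>" unfolding \<mu>_def by (rule INF_greatest) (use HM in auto)
  have mu_le: "\<mu> \<le> Hx x z" for z unfolding \<mu>_def by (rule INF_lower) auto
  have "\<mu> < \<infinity>" using mu_le[of x0] x0 Hx_fin[of x x0] by (metis less_eq_ereal_def less_ereal.simps(4) less_le_trans ereal_infty_less(1))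
  then obtain m where m: "\<mu> = ereal m" using mu1 by (cases \<mu>) auto
  have "\<forall>k. \<exists>y. Hx x y < ereal (m + 1 / (real k + 1))"
  proof
    fix k :: nat
    have "\<mu> < ereal (m + 1 / (real k + 1))" using m by simp
    then show "\<exists>y. Hx x y < ereal (m + 1 / (real k + 1))" unfolding \<mu>_def by (simp add: INF_less_iff)
  qed
  then obtain y where y: "\<And>k. Hx x (y k) < ereal (m + 1 / (real k + 1))" by metis
  have yf: "f (y k) \<noteq> \<infinity>" for k using y[of k] Hx_fin[of x "y k"] by auto
  define h where "h k = real_of_ereal (f (y k)) + psi x (y k)" for k
  have hy: "Hx x (y k) = ereal (h k)" for k using Hx_eq[OF yf] h_def by simp
  have hlo: "m \<le> h k" for k using mu_le[of "y k"] m hy[of k] by simp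
  have hhi: "h k < m + 1 / (real k + 1)" for k using y[of k] hy[of k] by simp
  have mid: "1 - cos (dist (y j) (y k) / 2) \<le> 1 / (2 * (real j + 1)) + 1 / (2 * (real k + 1))" for j k
  proof (cases "y j = y k")
    case True then show ?thesis by simp
  next
    case False
    obtain g where g: "geodesic g (y j) (y k)" using geod_ex by blast
    have u: "Hx x (g (dist (y j) (y k) / 2)) \<le> ereal ((h j + h k) / 2 - (1 - cos (dist (y j) (y k) / 2)))"
      using Hmid[OF yf yf False g, of x] unfolding Hx_def h_def by (simp add: add.assoc)
    have "ereal m \<le> Hx x (g (dist (y j) (y k) / 2))" using mu_le[of "g (dist (y j) (y k) / 2)"] m by simp
    from order_trans[OF this u]
    have "ereal m \<le> ereal ((h j + h k) / 2 - (1 - cos (dist (y j) (y k) / 2)))" .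
    then have a: "m \<le> (h j + h k) / 2 - (1 - cos (dist (y j) (y k) / 2))" by simp
    have eqs: "1 / (2 * (real j + 1)) = (1 / (real j + 1)) / 2" "1 / (2 * (real k + 1)) = (1 / (real k + 1)) / 2"
      by simp_all
    show ?thesis unfolding eqs by (rule key_lin[OF a hhi[of j] hhi[of k]])
  qed
  have b0: "(\<lambda>k. 1 / (2 * (real k + 1))) \<longlonglongrightarrow> 0"
  proof -
    have "(\<lambda>k. 1 / (real k + 1)) = (\<lambda>k. inverse (real (Suc k)))" by (simp add: divide_inverse add.commute)
    then have "(\<lambda>k. 1 / (real k + 1)) \<longlonglongrightarrow> 0" using LIMSEQ_inverse_real_of_nat by simp
    then have "(\<lambda>k. (1/2) * (1 / (real k + 1))) \<longlonglongrightarrow> 0" by (rule tendsto_mult_right_zero)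
    then show ?thesis by simp
  qed
  have "Cauchy y" by (rule cauchy_cos[OF dlt mid b0])
  then obtain p where p: "y \<longlonglongrightarrow> p" using cpl by (blast elim: completeE)
  have pc: "(\<lambda>k. psi x (y k)) \<longlonglongrightarrow> psi x p" by (rule psi_cont[OF p])
  have fp: "f p \<le> ereal (m - psi x p)"
  proof (rule ereal_le_epsilon2)
    fix e :: real assume e: "0 < e"
    have ev1: "eventually (\<lambda>k. psi x (y k) > psi x p - e / 2) sequentially"
      using pc e by (intro order_tendstoD) auto
    have ev2: "eventually (\<lambda>k. 1 / (2 * (real k + 1)) < e / 4) sequentially"
      using b0 e by (intro order_tendstoD) auto
    have "eventually (\<lambda>k. f (y k) \<le> ereal (m - psi x p + e)) sequentially"
      using ev1 ev2
    proof eventually_elim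
      case (elim k)
      have "1 / (real k + 1) < e / 2" using elim(2) by (simp add: field_simps)
      then have "real_of_ereal (f (y k)) \<le> m - psi x p + e" using hhi[of k] elim(1) unfolding h_def by linarith
      then show ?case using fin_eq[OF yf[of k]] by (metis ereal_less_eq(3))
    qed
    then have "f p \<le> ereal (m - psi x p + e)" by (rule lsc_le[OF p])
    then show "f p \<le> ereal (m - psi x p) + ereal e" by simp
  qed
  have pmin: "\<forall>z. Hx x p \<le> Hx x z"
  proof
    fix z
    have "Hx x p \<le> ereal (m - psi x p) + ereal (psi x p)" unfolding Hx_def using fp by (intro add_mono) auto
    also have "\<dots> = \<mu>" using m by simp
    also have "\<dots> \<le> Hx x z" by (rule mu_le)
    finally show "Hx x p \<le> Hx x z" .
  qed
  show ?thesis
  proof (rule ex1I[of _ p])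
    show "\<forall>z. Hx x p \<le> Hx x z" by (rule pmin)
  next
    fix q assume q: "\<forall>z. Hx x q \<le> Hx x z"
    show "q = p"
    proof (rule ccontr)
      assume ne: "q \<noteq> p"
      have qf: "f q \<noteq> \<infinity>" using q x0 Hx_fin[of x q] Hx_fin[of x x0] by (metis ereal_infty_less_eq(1))
      have pf: "f p \<noteq> \<infinity>" using fp by auto
      have eq: "Hx x q = Hx x p" using q pmin by (meson order_antisym)
      obtain g where g: "geodesic g q p" using geod_ex by blast
      define hq where "hq = real_of_ereal (f q) + psi x q"
      have hqe: "Hx x q = ereal hq" using Hx_eq[OF qf] hq_def by simp
      have hpe: "Hx x p = ereal hq" using eq hqe by simp
      have "Hx x p = ereal (real_of_ereal (f p) + psi x p)" using Hx_eq[OF pf] .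
      then have hpq: "real_of_ereal (f p) + psi x p = hq" using hpe by simp
      have u: "Hx x (g (dist q p / 2)) \<le> ereal ((hq + hq) / 2 - (1 - cos (dist q p / 2)))"
        using Hmid[OF qf pf ne g, of x] hpq unfolding Hx_def hq_def by (simp add: add.assoc)
      have "ereal hq \<le> Hx x (g (dist q p / 2))" using q hqe by metis
      from order_trans[OF this u]
      have "ereal hq \<le> ereal (hq - (1 - cos (dist q p / 2)))" by simp
      then have "hq \<le> hq - (1 - cos (dist q p / 2))" by simp
      then show False using kappa(3)[OF ne] by simp
    qed
  qed
qed

end


lemma diff_quot_bound:
  fixes G :: "real \<Rightarrow> real"
  assumes d: "(G has_real_derivative G') (at 0)"
    and b: "\<And>t. 0 < t \<Longrightarrow> t < 1 \<Longrightarrow> K \<le> (G t - G 0) / t"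
  shows "K \<le> G'"
proof -
  have "(G has_real_derivative G') (at 0 within {0<..})" by (rule has_field_derivative_at_within[OF d])
  then have lim: "((\<lambda>t. (G t - G 0) / (t - 0)) \<longlongrightarrow> G') (at_right 0)"
    by (simp add: has_field_derivative_iff)
  have ev: "eventually (\<lambda>t. K \<le> (G t - G 0) / (t - 0)) (at_right (0::real))"
    unfolding eventually_at_right_field by (rule exI[of _ 1]) (auto intro: b)
  show ?thesis by (rule tendsto_lowerbound[OF lim ev]) simp
qed

context ctx begin

lemma res_argmin_iff: "y \<in> Argmin (\<lambda>y. f y + ereal (tan (dist y x) * sin (dist y x))) \<longleftrightarrow> (\<forall>z. Hx x y \<le> Hx x z)"
  by (simp add: Argmin_def Hx_def psi_def)

lemma R_min: "Hx x (resolvent f x) \<le> Hx x z"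
proof -
  have "resolvent f x \<in> Argmin (\<lambda>y. f y + ereal (tan (dist y x) * sin (dist y x)))"
    unfolding resolvent_def by (rule theI') (simp add: res_argmin_iff res_ex1)
  then show ?thesis by (simp add: res_argmin_iff)
qed

lemma R_unique: "(\<forall>z. Hx x y \<le> Hx x z) \<Longrightarrow> resolvent f x = y"
  unfolding resolvent_def res_argmin_iff[symmetric]
  by (rule the1_equality) (simp_all add: res_argmin_iff res_ex1)

lemma R_fin: "f (resolvent f x) \<noteq> \<infinity>"
proof -
  obtain x0 where x0: "f x0 \<noteq> \<infinity>" using prp unfolding proper_fun_def by blast
  have "Hx x (resolvent f x) \<le> Hx x x0" by (rule R_min)
  moreover have "Hx x x0 \<noteq> \<infinity>" using x0 Hx_fin by blast
  ultimately have "Hx x (resolvent f x) \<noteq> \<infinity>" by (metis ereal_infty_less_eq(1))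
  then show ?thesis using Hx_fin by blast
qed

lemma var_ineq:
  fixes x z :: 'a
  assumes fz: "f z \<noteq> \<infinity>" and ne: "z \<noteq> resolvent f x"
  shows "real_of_ereal (f (resolvent f x)) - real_of_ereal (f z)
    \<le> (1 + 1 / (cos (dist (resolvent f x) x))^2) * (dist (resolvent f x) z / sin (dist (resolvent f x) z))
       * (cos (dist (resolvent f x) z) * cos (dist (resolvent f x) x) - cos (dist z x))"
proof -
  define y where "y = resolvent f x"
  define D where "D = dist y z"
  define a where "a = cos (dist y x)"
  define b where "b = cos (dist z x)"
  define c where "c = cos D"
  define Fy where "Fy = real_of_ereal (f y)"
  define Fz where "Fz = real_of_ereal (f z)"
  have fy: "f y = ereal Fy" using fin_eq[OF R_fin] unfolding Fy_def y_def .
  have fz': "f z = ereal Fz" using fin_eq[OF fz] unfolding Fz_def .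
  have Dp: "0 < D" using ne unfolding D_def y_def by simp
  have Dlt: "D < pi/2" unfolding D_def by (rule dlt)
  have sD: "0 < sin D" using Dp half_pi_lt[OF Dlt] by (intro sin_gt_zero) auto
  have a: "0 < a" "a \<le> 1" unfolding a_def using cpos by auto
  have b: "0 < b" "b \<le> 1" unfolding b_def using cpos by auto
  obtain g where g: "geodesic g y z" using geod_ex by blast
  define L where "L t = (sin ((1 - t) * D) * a + sin (t * D) * b) / sin D" for t
  define G where "G t = inverse (L t) - L t" for t
  have L0: "L 0 = a" unfolding L_def using sD by simp
  have bound: "Fy - Fz \<le> (G t - G 0) / t" if t: "0 < t" "t < 1" for t
  proof -
    define w where "w = g (t * D)"
    have tD: "0 \<le> t * D" "t * D \<le> D" using t Dp by (auto simp: mult_le_cancel_right1)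
    have cw: "f w \<le> ereal ((1 - t) * Fy + t * Fz)"
      using cvx'[OF g t] fy fz' unfolding w_def D_def by simp
    have fw: "f w \<noteq> \<infinity>" using cw by auto
    define Fw where "Fw = real_of_ereal (f w)"
    have fw': "f w = ereal Fw" using fin_eq[OF fw] unfolding Fw_def .
    have Fw: "Fw \<le> (1 - t) * Fy + t * Fz" using cw fw' by simp
    have "Hx x y \<le> Hx x w" unfolding y_def by (rule R_min)
    then have m: "Fy + psi x y \<le> Fw + psi x w" unfolding Hx_def using fy fw' by simp
    have fa: "sin (D - t * D) * a + sin (t * D) * b \<le> cos (dist w x) * sin D"
      using factA[OF g Dp[unfolded D_def] tD[unfolded D_def], of x] unfolding w_def a_def b_def D_def .
    have "sin (D - t * D) = sin ((1 - t) * D)" by (simp add: algebra_simps)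
    then have Lw: "L t \<le> cos (dist w x)" using fa sD unfolding L_def by (simp add: divide_le_eq)
    have Lp: "0 < L t"
    proof -
      have "0 < sin ((1 - t) * D)" using t Dp half_pi_lt[OF Dlt]
        by (intro sin_gt_zero) (auto simp: mult_le_cancel_right1 intro: le_less_trans[of _ D])
      moreover have "0 \<le> sin (t * D)"
      proof -
        have "t * D \<le> pi" using tD half_pi_lt[OF Dlt] by linarith
        then show ?thesis using tD by (intro sin_ge_zero) auto
      qed
      ultimately show ?thesis unfolding L_def using a b sD
        by (intro divide_pos_pos add_pos_nonneg mult_pos_pos mult_nonneg_nonneg) auto
    qed
    have "psi x w = Q (cos (dist w x))" by (rule psi_Q)
    also have "\<dots> \<le> Q (L t)" using Lw Lp by (intro Q_anti) auto
    also have "\<dots> = G t" unfolding Q_def G_def by (simp add: inverse_eq_divide)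
    finally have pw: "psi x w \<le> G t" .
    have "psi x y = G 0" unfolding psi_Q G_def L0 Q_def a_def by (simp add: inverse_eq_divide)
    then have "t * (Fy - Fz) \<le> G t - G 0" using m Fw pw by (simp add: algebra_simps)
    then show ?thesis using t by (simp add: pos_le_divide_eq mult.commute)
  qed
  define L' where "L' = (- D * cos D * a + D * b) / sin D"
  have dL: "(L has_real_derivative L') (at 0)"
    unfolding L_def L'_def using sD
    by (auto intro!: derivative_eq_intros simp: field_simps power2_eq_square)
  have "((\<lambda>t. inverse (L t)) has_real_derivative - (L' * inverse ((L 0) ^ Suc (Suc 0)))) (at 0)"
    by (rule DERIV_inverse_fun[OF dL]) (use L0 a in simp)
  then have dG: "(G has_real_derivative (- (L' * inverse ((L 0) ^ Suc (Suc 0))) - L')) (at 0)"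
    unfolding G_def by (intro DERIV_diff dL)
  have "Fy - Fz \<le> - (L' * inverse ((L 0) ^ Suc (Suc 0))) - L'" by (rule diff_quot_bound[OF dG bound])
  also have "\<dots> = (1 + 1 / a^2) * (D / sin D) * (c * a - b)"
    unfolding L0 L'_def c_def using sD a by (simp add: field_simps power2_eq_square)
  finally show ?thesis unfolding Fy_def Fz_def y_def D_def a_def b_def c_def .
qed

end

context ctx begin

abbreviation R where "R \<equiv> resolvent f"

lemma fix_argmin:
  assumes "R q = q" shows "q \<in> Argmin f"
  unfolding Argmin_def
proof (intro CollectI allI)
  fix z
  show "f q \<le> f z"
  proof (cases "f z = \<infinity> \<or> z = q")
    case True then show ?thesis by auto
  next
    case False
    then have fz: "f z \<noteq> \<infinity>" and ne: "z \<noteq> R q" using assms by auto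
    have "real_of_ereal (f (R q)) - real_of_ereal (f z) \<le> 0"
      using var_ineq[OF fz ne] assms by (simp add: dist_commute)
    then have "real_of_ereal (f q) \<le> real_of_ereal (f z)" using assms by simp
    then show ?thesis using fin_eq[OF fz] fin_eq[OF R_fin[of q]] assms by (metis ereal_less_eq(3))
  qed
qed

lemma argmin_fix:
  assumes "q \<in> Argmin f" shows "R q = q"
proof (rule R_unique, intro allI)
  fix z
  have "f q \<le> f z" using assms unfolding Argmin_def by blast
  moreover have "ereal 0 \<le> ereal (psi q z)" using psi_nonneg by simp
  ultimately have "f q + ereal 0 \<le> f z + ereal (psi q z)" by (rule add_mono)
  then show "Hx q q \<le> Hx q z" unfolding Hx_def psi_self by simp
qed

lemma pair_ineq:
  fixes x1 x2 :: 'a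
  defines "y1 \<equiv> R x1" and "y2 \<equiv> R x2"
  defines "a1 \<equiv> cos (dist y1 x1)" and "a2 \<equiv> cos (dist y2 x2)"
  defines "b1 \<equiv> cos (dist y2 x1)" and "b2 \<equiv> cos (dist y1 x2)"
  defines "c \<equiv> cos (dist y1 y2)"
  shows "(1 + 1 / a1^2) * b1 + (1 + 1 / a2^2) * b2 \<le> c * ((1 + 1 / a1^2) * a1 + (1 + 1 / a2^2) * a2)"
proof (cases "y1 = y2")
  case True
  then show ?thesis unfolding a1_def a2_def b1_def b2_def c_def by (simp add: algebra_simps)
next
  case False
  define D where "D = dist y1 y2"
  have Dp: "0 < D" using False unfolding D_def by simp
  have sD: "0 < sin D" using Dp half_pi_lt[OF dlt[of y1 y2]] unfolding D_def by (intro sin_gt_zero) auto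
  define w1 where "w1 = 1 + 1 / a1^2"
  define w2 where "w2 = 1 + 1 / a2^2"
  define K where "K = D / sin D"
  have i1: "real_of_ereal (f y1) - real_of_ereal (f y2) \<le> w1 * K * (c * a1 - b1)"
    using var_ineq[OF R_fin[of x2], of x1] False
    unfolding y1_def y2_def a1_def b1_def c_def D_def w1_def K_def by simp
  have i2: "real_of_ereal (f y2) - real_of_ereal (f y1) \<le> w2 * K * (c * a2 - b2)"
    using var_ineq[OF R_fin[of x1], of x2] False
    unfolding y1_def y2_def a2_def b2_def c_def D_def w2_def K_def by (simp add: dist_commute)
  have "w1 * K * (c * a1 - b1) + w2 * K * (c * a2 - b2) = K * (w1 * (c * a1 - b1) + w2 * (c * a2 - b2))"
    by (simp add: algebra_simps)
  then have "0 \<le> K * (w1 * (c * a1 - b1) + w2 * (c * a2 - b2))" using i1 i2 by linarith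
  moreover have "0 < K" using Dp sD unfolding K_def by simp
  ultimately have "0 \<le> w1 * (c * a1 - b1) + w2 * (c * a2 - b2)"
    by (simp add: zero_le_mult_iff)
  then show ?thesis unfolding w1_def[symmetric] w2_def[symmetric] by (simp add: algebra_simps)
qed

lemma fejer:
  assumes p: "p \<in> Argmin f"
  shows "cos (dist p x) \<le> cos (dist (R x) p) * cos (dist (R x) x)"
proof -
  have Rp: "R p = p" by (rule argmin_fix[OF p])
  define a where "a = cos (dist (R x) x)"
  define c where "c = cos (dist (R x) p)"
  define w where "w = 1 + 1 / a^2"
  have "w * cos (dist p x) + 2 * c \<le> c * (w * a + 2)"
    using pair_ineq[of x p] Rp unfolding a_def c_def w_def by simp
  then have "w * cos (dist p x) \<le> w * (c * a)" by (simp add: algebra_simps)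
  moreover have "0 < w" unfolding w_def by (simp add: add_pos_nonneg)
  ultimately show ?thesis unfolding a_def c_def by simp
qed

end

context ctx begin

definition rho :: "(nat \<Rightarrow> 'a) \<Rightarrow> 'a \<Rightarrow> real" where
  "rho xs z = real_of_ereal (limsup (\<lambda>n. ereal (dist (xs n) z)))"

definition theta :: "(nat \<Rightarrow> 'a) \<Rightarrow> 'a \<Rightarrow> real" where
  "theta xs z = cos (rho xs z)"

lemma limsup_rho: "limsup (\<lambda>n. ereal (dist (xs n) z)) = ereal (rho xs z)"
  and rho_bd: "0 \<le> rho xs z" "rho xs z \<le> pi/2"
proof -
  have u: "limsup (\<lambda>n. ereal (dist (xs n) z)) \<le> ereal (pi/2)"
  proof (rule Limsup_bounded, intro always_eventually allI)
    fix n show "ereal (dist (xs n) z) \<le> ereal (pi/2)" using less_imp_le[OF dlt[of "xs n" z]] by simp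
  qed
  have l: "ereal 0 \<le> limsup (\<lambda>n. ereal (dist (xs n) z))"
    by (rule le_Limsup) auto
  from u l obtain r where r: "limsup (\<lambda>n. ereal (dist (xs n) z)) = ereal r"
    by (cases "limsup (\<lambda>n. ereal (dist (xs n) z))") auto
  show "limsup (\<lambda>n. ereal (dist (xs n) z)) = ereal (rho xs z)" unfolding rho_def r by simp
  show "0 \<le> rho xs z" "rho xs z \<le> pi/2" using u l r unfolding rho_def by auto
qed

lemma rho_ev: "0 < e \<Longrightarrow> eventually (\<lambda>n. dist (xs n) z < rho xs z + e) sequentially"
proof -
  assume e: "0 < e"
  have "limsup (\<lambda>n. ereal (dist (xs n) z)) < ereal (rho xs z + e)" using e limsup_rho by simp
  then have "eventually (\<lambda>n. ereal (dist (xs n) z) < ereal (rho xs z + e)) sequentially"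
    by (rule Limsup_lessD)
  then show ?thesis by simp
qed

lemma rho_freq: "0 < e \<Longrightarrow> frequently (\<lambda>n. rho xs z - e < dist (xs n) z) sequentially"
proof (rule ccontr)
  assume e: "0 < e" and nf: "\<not> frequently (\<lambda>n. rho xs z - e < dist (xs n) z) sequentially"
  then have "eventually (\<lambda>n. ereal (dist (xs n) z) \<le> ereal (rho xs z - e)) sequentially"
    unfolding not_frequently by (auto elim!: eventually_mono)
  then have "limsup (\<lambda>n. ereal (dist (xs n) z)) \<le> ereal (rho xs z - e)" by (rule Limsup_bounded)
  then show False using e limsup_rho by simp
qed

lemma rho_le: "eventually (\<lambda>n. dist (xs n) z \<le> t) sequentially \<Longrightarrow> rho xs z \<le> t"
proof -
  assume "eventually (\<lambda>n. dist (xs n) z \<le> t) sequentially"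
  then have "eventually (\<lambda>n. ereal (dist (xs n) z) \<le> ereal t) sequentially" by simp
  then have "limsup (\<lambda>n. ereal (dist (xs n) z)) \<le> ereal t" by (rule Limsup_bounded)
  then show ?thesis using limsup_rho by simp
qed

lemma cos_in: "0 \<le> u \<Longrightarrow> u \<le> pi/2 \<Longrightarrow> 0 \<le> v \<Longrightarrow> v \<le> pi/2 \<Longrightarrow> u \<le> v \<Longrightarrow> cos v \<le> cos u"
  using pi_gt_zero by (intro cos_monotone_0_pi_le) auto

lemma theta_bd: "0 \<le> theta xs z" "theta xs z \<le> 1"
  unfolding theta_def using rho_bd[of xs z] pi_gt_zero by (auto intro!: cos_ge_zero)

lemma theta_ev: "0 < e \<Longrightarrow> eventually (\<lambda>n. theta xs z - e < cos (dist (xs n) z)) sequentially"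
proof -
  assume e: "0 < e"
  show ?thesis using rho_ev[OF e, of xs z]
  proof eventually_elim
    case (elim n)
    show ?case
    proof (cases "dist (xs n) z \<le> rho xs z")
      case True
      then have "cos (rho xs z) \<le> cos (dist (xs n) z)"
        using rho_bd[of xs z] less_imp_le[OF dlt[of "xs n" z]] by (intro cos_in) auto
      then show ?thesis using e unfolding theta_def by simp
    next
      case False
      have "\<bar>cos (rho xs z) - cos (dist (xs n) z)\<bar> \<le> \<bar>rho xs z - dist (xs n) z\<bar>" by (rule cos_lip)
      then show ?thesis using False elim unfolding theta_def by linarith
    qed
  qed
qed

lemma theta_freq: "0 < e \<Longrightarrow> frequently (\<lambda>n. cos (dist (xs n) z) < theta xs z + e) sequentially"
proof -
  assume e: "0 < e"
  show ?thesis using rho_freq[OF e, of xs z]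
  proof (rule frequently_elim1)
    fix n assume a: "rho xs z - e < dist (xs n) z"
    show "cos (dist (xs n) z) < theta xs z + e"
    proof (cases "rho xs z \<le> dist (xs n) z")
      case True
      then have "cos (dist (xs n) z) \<le> cos (rho xs z)"
        using rho_bd[of xs z] less_imp_le[OF dlt[of "xs n" z]] by (intro cos_in) auto
      then show ?thesis using e unfolding theta_def by simp
    next
      case False
      have "\<bar>cos (rho xs z) - cos (dist (xs n) z)\<bar> \<le> \<bar>rho xs z - dist (xs n) z\<bar>" by (rule cos_lip)
      then show ?thesis using False a unfolding theta_def by linarith
    qed
  qed
qed

lemma theta_ge: "eventually (\<lambda>n. t \<le> cos (dist (xs n) z)) sequentially \<Longrightarrow> t \<le> theta xs z"
proof (cases "t \<le> 0")
  case True then show ?thesis using theta_bd by (meson order_trans)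
next
  case False
  assume ev: "eventually (\<lambda>n. t \<le> cos (dist (xs n) z)) sequentially"
  have t: "0 < t" using False by simp
  show ?thesis
  proof (cases "t \<le> 1")
    case False
    have "eventually (\<lambda>n. False) sequentially"
      apply (rule eventually_mono[OF ev]) using False by (meson cos_le_one order_trans)
    then show ?thesis by simp
  next
    case True
    have ac: "0 \<le> arccos t" "arccos t \<le> pi" using t True by (auto intro: arccos_lbound arccos_ubound)
    have "eventually (\<lambda>n. dist (xs n) z \<le> arccos t) sequentially" using ev
    proof eventually_elim
      case (elim n)
      have "cos (arccos t) \<le> cos (dist (xs n) z)" using elim t True by (simp add: cos_arccos)
      then show ?case using ac zero_le_dist[of "xs n" z] half_pi_le[OF dlt[of "xs n" z]]
        by (subst (asm) cos_mono_le_eq) auto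
    qed
    then have "rho xs z \<le> arccos t" by (rule rho_le)
    then have "cos (arccos t) \<le> cos (rho xs z)" using ac rho_bd[of xs z] by (intro cos_monotone_0_pi_le) auto
    then show ?thesis unfolding theta_def using t True by (simp add: cos_arccos)
  qed
qed

end

context ctx begin

lemma theta_lin:
  assumes c: "0 \<le> c0" "0 \<le> c1" "0 \<le> c2" and e: "e \<longlonglongrightarrow> e0"
    and ev: "eventually (\<lambda>n. c1 * cos (dist (xs n) z1) + c2 * cos (dist (xs n) z2)
              \<le> c0 * cos (dist (xs n) m) + e n) sequentially"
  shows "c1 * theta xs z1 + c2 * theta xs z2 \<le> c0 * theta xs m + e0"
proof (rule ccontr)
  assume neg: "\<not> ?thesis"
  define g where "g = c1 * theta xs z1 + c2 * theta xs z2 - (c0 * theta xs m + e0)"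
  have g: "0 < g" using neg unfolding g_def by simp
  define \<epsilon> where "\<epsilon> = g / (c0 + c1 + c2 + 2)"
  have den: "0 < c0 + c1 + c2 + 2" using c by simp
  have ep: "0 < \<epsilon>" unfolding \<epsilon>_def using g den by simp
  have "\<epsilon> * (c0 + c1 + c2 + 2) = g" unfolding \<epsilon>_def using den by simp
  then have geq: "g = \<epsilon> * c0 + \<epsilon> * c1 + \<epsilon> * c2 + 2 * \<epsilon>" by (simp add: algebra_simps)
  have ev3: "eventually (\<lambda>n. e n < e0 + \<epsilon>) sequentially"
    using e ep by (intro order_tendstoD) auto
  have "eventually (\<lambda>n. cos (dist (xs n) m) < theta xs m + \<epsilon> \<longrightarrow> False) sequentially"
    using theta_ev[OF ep, of xs z1] theta_ev[OF ep, of xs z2] ev3 ev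
  proof eventually_elim
    case (elim n)
    show ?case
    proof
      assume a5: "cos (dist (xs n) m) < theta xs m + \<epsilon>"
      have m1: "c1 * (theta xs z1 - \<epsilon>) \<le> c1 * cos (dist (xs n) z1)"
        using elim(1) c by (intro mult_left_mono) auto
      have m2: "c2 * (theta xs z2 - \<epsilon>) \<le> c2 * cos (dist (xs n) z2)"
        using elim(2) c by (intro mult_left_mono) auto
      have m0: "c0 * cos (dist (xs n) m) \<le> c0 * (theta xs m + \<epsilon>)"
        using a5 c by (intro mult_left_mono) auto
      have "c1 * theta xs z1 - \<epsilon> * c1 + (c2 * theta xs z2 - \<epsilon> * c2) \<le> c0 * theta xs m + \<epsilon> * c0 + e0 + \<epsilon>"
        using m1 m2 m0 elim(3) elim(4) by (simp add: algebra_simps)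
      then show False using geq ep unfolding g_def by linarith
    qed
  qed
  from frequently_rev_mp[OF theta_freq[OF ep, of xs m] this] show False by simp
qed

lemma theta_lip: "theta xs w - dist z w \<le> theta xs z"
proof -
  have "1 * theta xs w + 0 * theta xs w \<le> 1 * theta xs z + dist z w"
  proof (rule theta_lin[where e = "\<lambda>_. dist z w"])
    show "eventually (\<lambda>n. 1 * cos (dist (xs n) w) + 0 * cos (dist (xs n) w) \<le> 1 * cos (dist (xs n) z) + dist z w) sequentially"
    proof (intro always_eventually allI)
      fix n
      have "\<bar>cos (dist (xs n) w) - cos (dist (xs n) z)\<bar> \<le> \<bar>dist (xs n) w - dist (xs n) z\<bar>" by (rule cos_lip)
      also have "\<dots> \<le> dist z w"
      proof -
        have "dist (xs n) w \<le> dist (xs n) z + dist z w" by (rule dist_triangle)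
        moreover have "dist (xs n) z \<le> dist (xs n) w + dist w z" by (rule dist_triangle)
        ultimately show ?thesis by (simp add: dist_commute abs_le_iff)
      qed
      finally show "1 * cos (dist (xs n) w) + 0 * cos (dist (xs n) w) \<le> 1 * cos (dist (xs n) z) + dist z w" by simp
    qed
  qed auto
  then show ?thesis by simp
qed

end

lemma div_helper: assumes "0 < (T::real)" "2 * T * x < A + B" shows "x < A / (2 * T) + B / (2 * T)"
proof -
  have "x < (A + B) / (2 * T)" using assms by (simp add: pos_less_divide_eq mult.commute)
  then show ?thesis by (simp add: add_divide_distrib)
qed

context ctx begin

lemma theta_mid:
  assumes ne: "z1 \<noteq> z2" and g: "geodesic g z1 z2"
  shows "theta xs z1 + theta xs z2 \<le> 2 * cos (dist z1 z2 / 2) * theta xs (g (dist z1 z2 / 2))"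
proof -
  have "1 * theta xs z1 + 1 * theta xs z2 \<le> (2 * cos (dist z1 z2 / 2)) * theta xs (g (dist z1 z2 / 2)) + 0"
  proof (rule theta_lin[where e = "\<lambda>_. 0"])
    show "0 \<le> 2 * cos (dist z1 z2 / 2)" using kappa(1)[of z1 z2] by simp
    show "eventually (\<lambda>n. 1 * cos (dist (xs n) z1) + 1 * cos (dist (xs n) z2)
        \<le> 2 * cos (dist z1 z2 / 2) * cos (dist (xs n) (g (dist z1 z2 / 2))) + 0) sequentially"
    proof (intro always_eventually allI)
      fix n
      have "cos (dist z1 (xs n)) + cos (dist z2 (xs n)) \<le> 2 * cos (dist z1 z2 / 2) * cos (dist (g (dist z1 z2 / 2)) (xs n))"
        using midA[OF g] ne by simp
      then show "1 * cos (dist (xs n) z1) + 1 * cos (dist (xs n) z2)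
        \<le> 2 * cos (dist z1 z2 / 2) * cos (dist (xs n) (g (dist z1 z2 / 2))) + 0"
        by (simp add: dist_commute)
    qed
  qed auto
  then show ?thesis by simp
qed

lemma asym_center:
  assumes pos: "0 < theta xs y0"
  shows "\<exists>q. (\<forall>z. theta xs z \<le> theta xs q) \<and> (\<forall>z. z \<noteq> q \<longrightarrow> theta xs z < theta xs q)"
proof -
  define T where "T = Sup (range (theta xs))"
  have bdd: "bdd_above (range (theta xs))" by (rule bdd_aboveI2[where M=1]) (rule theta_bd(2))
  have Tup: "theta xs z \<le> T" for z unfolding T_def by (rule cSUP_upper[OF _ bdd]) auto
  have Tpos: "0 < T" using Tup[of y0] pos by linarith
  have "\<forall>k::nat. \<exists>z. T - 1 / (real k + 1) < theta xs z"
  proof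
    fix k :: nat
    have "T - 1 / (real k + 1) < T" by simp
    then show "\<exists>z. T - 1 / (real k + 1) < theta xs z" unfolding T_def using less_cSUP_iff[OF _ bdd] by auto
  qed
  then obtain z where z: "\<And>k. T - 1 / (real k + 1) < theta xs (z k)" by metis
  define b where "b k = 1 / (2 * T * (real k + 1))" for k :: nat
  have mid: "1 - cos (dist (z j) (z k) / 2) \<le> b j + b k" for j k
  proof (cases "z j = z k")
    case True then show ?thesis unfolding b_def using Tpos by simp
  next
    case False
    obtain g where g: "geodesic g (z j) (z k)" using geod_ex by blast
    define \<kappa> where "\<kappa> = cos (dist (z j) (z k) / 2)"
    have \<kappa>: "0 < \<kappa>" "\<kappa> \<le> 1" unfolding \<kappa>_def using kappa by auto
    have "theta xs (z j) + theta xs (z k) \<le> 2 * \<kappa> * theta xs (g (dist (z j) (z k) / 2))"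
      unfolding \<kappa>_def by (rule theta_mid[OF False g])
    also have "\<dots> \<le> 2 * \<kappa> * T" using \<kappa> Tup by (intro mult_left_mono) auto
    finally have a: "theta xs (z j) + theta xs (z k) \<le> 2 * \<kappa> * T" .
    have "2 * T - (1 / (real j + 1) + 1 / (real k + 1)) < 2 * \<kappa> * T" using a z[of j] z[of k] by linarith
    then have "2 * T * (1 - \<kappa>) < 1 / (real j + 1) + 1 / (real k + 1)" by (simp add: algebra_simps)
    then have "1 - \<kappa> < (1 / (real j + 1)) / (2 * T) + (1 / (real k + 1)) / (2 * T)"
      by (rule div_helper[OF Tpos])
    also have "\<dots> = b j + b k" unfolding b_def by (simp add: mult.commute)
    finally show ?thesis unfolding \<kappa>_def by simp
  qed
  have b0: "b \<longlonglongrightarrow> 0"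
  proof -
    have "(\<lambda>k. inverse (real (Suc k))) \<longlonglongrightarrow> 0" by (rule LIMSEQ_inverse_real_of_nat)
    then have "(\<lambda>k. (1 / (2 * T)) * inverse (real (Suc k))) \<longlonglongrightarrow> 0" by (rule tendsto_mult_right_zero)
    moreover have "b = (\<lambda>k. (1 / (2 * T)) * inverse (real (Suc k)))"
      unfolding b_def by (auto simp: field_simps)
    ultimately show ?thesis by simp
  qed
  have "Cauchy z" by (rule cauchy_cos[OF dlt mid b0])
  then obtain p where p: "z \<longlonglongrightarrow> p" using cpl by (blast elim: completeE)
  have Tp: "T \<le> theta xs p"
  proof (rule ccontr)
    assume "\<not> ?thesis"
    then have gp: "0 < T - theta xs p" by simp
    define g where "g = T - theta xs p"
    have "0 < g / 2" using gp unfolding g_def by simp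
    from tendsto_iff[THEN iffD1, OF p, rule_format, OF this]
    have e1: "eventually (\<lambda>k. dist (z k) p < g / 2) sequentially" .
    have "(\<lambda>k. inverse (real (Suc k))) \<longlonglongrightarrow> 0" by (rule LIMSEQ_inverse_real_of_nat)
    then have e2: "eventually (\<lambda>k. inverse (real (Suc k)) < g / 2) sequentially"
      using gp unfolding g_def by (intro order_tendstoD) auto
    from e1 e2 have "eventually (\<lambda>k. False) sequentially"
    proof eventually_elim
      case (elim k)
      have "theta xs (z k) - dist p (z k) \<le> theta xs p" by (rule theta_lip)
      moreover have "1 / (real k + 1) = inverse (real (Suc k))" by (simp add: inverse_eq_divide add.commute)
      ultimately show False using z[of k] elim unfolding g_def by (simp add: dist_commute) 
    qed
    then show False by simp
  qed
  show ?thesis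
  proof (intro exI conjI allI impI)
    fix w show "theta xs w \<le> theta xs p" using Tup[of w] Tp by linarith
  next
    fix w assume ne: "w \<noteq> p"
    show "theta xs w < theta xs p"
    proof (rule ccontr)
      assume "\<not> ?thesis"
      then have w: "T \<le> theta xs w" using Tp by linarith
      obtain g where g: "geodesic g w p" using geod_ex by blast
      define \<kappa> where "\<kappa> = cos (dist w p / 2)"
      have \<kappa>: "0 < \<kappa>" "\<kappa> < 1" unfolding \<kappa>_def using kappa ne by auto
      have "theta xs w + theta xs p \<le> 2 * \<kappa> * theta xs (g (dist w p / 2))"
        unfolding \<kappa>_def by (rule theta_mid[OF ne g])
      also have "\<dots> \<le> 2 * \<kappa> * T" using \<kappa> Tup by (intro mult_left_mono) auto
      finally have "2 * T \<le> 2 * \<kappa> * T" using w Tp by linarith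
      then have "T * 1 \<le> T * \<kappa>" by (simp add: algebra_simps)
      then show False using \<kappa> Tpos by simp
    qed
  qed
qed

end


lemma decay:
  fixes e :: "nat \<Rightarrow> real"
  assumes s: "0 \<le> s" "s < 1" and rec: "\<And>n. n \<ge> N \<Longrightarrow> s * e n \<le> e (Suc n)" and ep: "0 < \<epsilon>"
  shows "eventually (\<lambda>n. - \<epsilon> < e n) sequentially"
proof -
  have ind: "s ^ k * e N \<le> e (N + k)" for k
  proof (induction k)
    case 0 then show ?case by simp
  next
    case (Suc k)
    have "s ^ Suc k * e N = s * (s ^ k * e N)" by simp
    also have "\<dots> \<le> s * e (N + k)" using Suc s by (intro mult_left_mono) auto
    also have "\<dots> \<le> e (Suc (N + k))" by (rule rec) simp
    finally show ?case by simp
  qed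
  have "(\<lambda>k. s ^ k) \<longlonglongrightarrow> 0" using s by (intro LIMSEQ_power_zero) auto
  then have "(\<lambda>k. s ^ k * \<bar>e N\<bar>) \<longlonglongrightarrow> 0" by (rule tendsto_mult_left_zero)
  then have "eventually (\<lambda>k. s ^ k * \<bar>e N\<bar> < \<epsilon>) sequentially" using ep by (intro order_tendstoD) auto
  then obtain K where K: "\<And>k. k \<ge> K \<Longrightarrow> s ^ k * \<bar>e N\<bar> < \<epsilon>" by (auto simp: eventually_sequentially)
  show ?thesis unfolding eventually_sequentially
  proof (intro exI allI impI)
    fix n assume n: "N + K \<le> n"
    define k where "k = n - N"
    have nk: "n = N + k" "K \<le> k" using n unfolding k_def by auto
    have "s ^ k * (- \<bar>e N\<bar>) \<le> s ^ k * e N" by (rule mult_left_mono) (use s in auto)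
    then show "- \<epsilon> < e n" unfolding nk(1) using ind[of k] K[OF nk(2)] by simp
  qed
qed

context ctx begin

lemma orbit_Suc: "(R ^^ Suc n) x = R ((R ^^ n) x)" by simp

lemma step_w:
  fixes a \<alpha> b w1 w2 \<alpha>0 \<beta> :: real
  assumes "0 < a" "0 < \<alpha>" "a \<le> 1" "b \<le> 1" "0 \<le> w1" "0 \<le> w2"
    and "w1 * \<alpha>0 + w2 * \<beta> \<le> \<alpha> * (w1 * a + w2 * b)"
  shows "w1 * \<alpha>0 + w2 * \<beta> \<le> \<alpha> * (w1 + w2 * b)"
proof -
  have "w1 * a \<le> w1" using assms by (intro mult_right_le_one_le) auto
  then have "\<alpha> * (w1 * a) \<le> \<alpha> * w1" using assms by (intro mult_left_mono) auto
  moreover have "\<alpha> * (w1 * a + w2 * b) = \<alpha> * (w1 * a) + \<alpha> * (w2 * b)" "\<alpha> * (w1 + w2 * b) = \<alpha> * w1 + \<alpha> * (w2 * b)"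
    by (simp_all add: algebra_simps)
  ultimately show ?thesis using assms(7) by argo
qed

end


lemma frac_mono_aux:
  fixes w W c d :: real
  assumes "0 < w" "w \<le> W" "0 < c" "d \<le> 0"
  shows "(W / (W + c)) * d \<le> (w / (w + c)) * d"
proof -
  have "w / (w + c) \<le> W / (W + c)" using assms by (simp add: divide_le_eq le_divide_eq field_simps)
  then show ?thesis by (rule mult_right_mono_neg[OF _ assms(4)])
qed

lemma div_mult_cancel_aux: "(b::real) \<noteq> 0 \<Longrightarrow> X / b * b = X" by simp

context ctx begin

lemma hard:
  fixes x :: 'a
  defines "xs \<equiv> \<lambda>n. (R ^^ n) x"
  assumes sb: "spherically_bounded xs"
    and st: "(SUP n. ereal (dist (xs (Suc n)) (xs n))) < ereal (pi/2)"
  shows "Argmin f \<noteq> {}"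
proof -
  have xsS: "xs (Suc n) = R (xs n)" for n unfolding xs_def by simp
  obtain y0 where y0: "limsup (\<lambda>n. ereal (dist (xs n) y0)) < ereal (pi/2)"
    using sb unfolding spherically_bounded_def by (auto simp: INF_less_iff)
  have "rho xs y0 < pi/2" using y0 limsup_rho by simp
  then have th0: "0 < theta xs y0" unfolding theta_def using rho_bd[of xs y0] pi_gt_zero
    by (intro cos_gt_zero_pi) linarith+
  obtain q where qmax: "\<And>z. theta xs z \<le> theta xs q" and quniq: "\<And>z. z \<noteq> q \<Longrightarrow> theta xs z < theta xs q"
    using asym_center[OF th0] by blast
  define S where "S = (SUP n. ereal (dist (xs (Suc n)) (xs n)))"
  have Sup: "ereal (dist (xs (Suc n)) (xs n)) \<le> S" for n unfolding S_def by (rule SUP_upper) auto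
  have "ereal 0 \<le> S" using Sup[of 0] by (metis order_trans ereal_less_eq(3) zero_le_dist)
  then obtain \<sigma> where \<sigma>: "S = ereal \<sigma>" using st unfolding S_def[symmetric] by (cases S) auto
  have \<sigma>b: "0 \<le> \<sigma>" "\<sigma> < pi/2" using \<sigma> st \<open>ereal 0 \<le> S\<close> unfolding S_def[symmetric] by auto
  have step: "dist (xs (Suc n)) (xs n) \<le> \<sigma>" for n using Sup[of n] \<sigma> by simp
  define cs where "cs = cos \<sigma>"
  have cs: "0 < cs" unfolding cs_def using \<sigma>b pi_gt_zero by (intro cos_gt_zero_pi) linarith+
  define u where "u = R q"
  have "u = q"
  proof (rule ccontr)
    assume ne: "u \<noteq> q"
    define a2 where "a2 = cos (dist u q)"
    have a2: "0 < a2" "a2 < 1" unfolding a2_def using cpos kappa(3)[OF ne]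
    proof -
      show "0 < cos (dist u q)" by (rule cpos)
      have "0 < dist u q" using ne by simp
      then have "cos (dist u q) < cos 0" using half_pi_le[OF dlt[of u q]] by (intro cos_monotone_0_pi) auto
      then show "cos (dist u q) < 1" by simp
    qed
    define w2 where "w2 = 1 + 1 / a2^2"
    have w2: "0 < w2" unfolding w2_def by (simp add: add_pos_nonneg)
    define W where "W = 1 + 1 / cs^2"
    define a1 where "a1 n = cos (dist (xs (Suc n)) (xs n))" for n
    define w1 where "w1 n = 1 + 1 / (a1 n)^2" for n
    have a1: "0 < a1 n" "a1 n \<le> 1" "cs \<le> a1 n" for n
    proof -
      show "0 < a1 n" "a1 n \<le> 1" unfolding a1_def using cpos by auto
      show "cs \<le> a1 n" unfolding a1_def cs_def
        using step[of n] \<sigma>b less_imp_le[OF dlt[of "xs (Suc n)" "xs n"]] by (intro cos_in) auto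
    qed
    have w1: "0 < w1 n" "w1 n \<le> W" for n
    proof -
      show "0 < w1 n" unfolding w1_def by (simp add: add_pos_nonneg)
      have "cs^2 \<le> (a1 n)^2" using a1[of n] cs by (intro power_mono) auto
      moreover have "0 < (a1 n)^2 * cs^2" using a1(1)[of n] cs by simp
      ultimately have "1 / (a1 n)^2 \<le> 1 / cs^2" by (intro divide_left_mono) auto
      then show "w1 n \<le> W" unfolding w1_def W_def by simp
    qed
    define \<alpha> where "\<alpha> n = cos (dist (xs n) u)" for n
    define \<beta> where "\<beta> n = cos (dist (xs n) q)" for n
    have I: "w1 n * \<alpha> n + w2 * \<beta> (Suc n) \<le> \<alpha> (Suc n) * (w1 n + w2 * a2)" for n
    proof -
      have "w1 n * \<alpha> n + w2 * \<beta> (Suc n) \<le> \<alpha> (Suc n) * (w1 n * a1 n + w2 * a2)"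
        using pair_ineq[of "xs n" q] unfolding xsS[symmetric] u_def[symmetric]
        unfolding w1_def a1_def \<alpha>_def \<beta>_def w2_def a2_def by (simp add: dist_commute)
      moreover have pos: "0 < \<alpha> (Suc n)" unfolding \<alpha>_def by (rule cpos)
      ultimately show ?thesis
        using step_w[OF a1(1) pos a1(2) less_imp_le[OF a2(2)] less_imp_le[OF w1(1)] less_imp_le[OF w2]] by blast
    qed
    define \<Theta> where "\<Theta> = theta xs q"
    have \<Theta>: "0 < \<Theta>" unfolding \<Theta>_def using qmax[of y0] th0 by linarith
    define \<epsilon> where "\<epsilon> = \<Theta> * (1 - a2) / 2 / (1 + a2)"
    have \<epsilon>: "0 < \<epsilon>" unfolding \<epsilon>_def using \<Theta> a2 by simp
    define T where "T = (\<Theta> - \<epsilon>) / a2"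
    have key: "\<Theta> < T - \<epsilon>"
    proof -
      have nz: "1 + a2 \<noteq> 0" using a2 by simp
      have "\<epsilon> * (1 + a2) = \<Theta> * (1 - a2) / 2" unfolding \<epsilon>_def using nz by (rule div_mult_cancel_aux)
      then have eq: "\<Theta> - \<Theta> * a2 = 2 * \<epsilon> + 2 * (\<epsilon> * a2)" by (simp add: algebra_simps)
      have "0 < \<epsilon> * a2" using \<epsilon> a2 by simp
      then have "\<Theta> * a2 < \<Theta> - \<epsilon> - \<epsilon> * a2" using eq \<epsilon> by argo
      then have "\<Theta> < (\<Theta> - \<epsilon> - \<epsilon> * a2) / a2" using a2 by (simp add: less_divide_eq)
      also have "\<dots> = T - \<epsilon>" unfolding T_def using a2 by (simp add: field_simps)
      finally show ?thesis .
    qed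
    obtain N where N: "\<And>n. n \<ge> N \<Longrightarrow> \<Theta> - \<epsilon> < \<beta> n"
      using theta_ev[OF \<epsilon>, of xs q] unfolding \<beta>_def \<Theta>_def eventually_sequentially by blast
    define s where "s = W / (W + w2 * a2)"
    have W0: "0 < W" using w1(1)[of 0] w1(2)[of 0] by linarith
    have s: "0 \<le> s" "s < 1" unfolding s_def using W0 w2 a2 by (auto simp: divide_less_eq)
    define e where "e n = min 0 (\<alpha> n - T)" for n
    have rec: "s * e n \<le> e (Suc n)" if n: "n \<ge> N" for n
    proof -
      have "w2 * (a2 * T) < w2 * \<beta> (Suc n)"
        using N[of "Suc n"] n w2 a2 unfolding T_def by simp
      then have A: "w1 n * (\<alpha> n - T) < (\<alpha> (Suc n) - T) * (w1 n + w2 * a2)"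
        using I[of n] by (simp add: algebra_simps)
      show ?thesis
      proof (cases "T \<le> \<alpha> (Suc n)")
        case True
        then have "e (Suc n) = 0" unfolding e_def by simp
        moreover have "s * e n \<le> 0" using s unfolding e_def by (simp add: mult_nonneg_nonpos)
        ultimately show ?thesis by simp
      next
        case False
        have pos: "0 < w1 n + w2 * a2" using w1(1)[of n] w2 a2 by (simp add: add_pos_pos)
        have "(\<alpha> (Suc n) - T) * (w1 n + w2 * a2) < 0" using False pos by (simp add: mult_neg_pos)
        then have "w1 n * (\<alpha> n - T) < 0" using A by linarith
        then have lt: "\<alpha> n - T < 0" using w1(1)[of n] by (simp add: mult_less_0_iff)
        have "(w1 n / (w1 n + w2 * a2)) * (\<alpha> n - T) < \<alpha> (Suc n) - T"
          using A pos by (simp add: divide_less_eq mult.commute mult.left_commute)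
        moreover have "s * (\<alpha> n - T) \<le> (w1 n / (w1 n + w2 * a2)) * (\<alpha> n - T)"
          unfolding s_def by (rule frac_mono_aux) (use w1 w2 a2 lt in auto)
        ultimately show ?thesis using lt False unfolding e_def by simp
      qed
    qed
    have "eventually (\<lambda>n. - \<epsilon> < e n) sequentially" by (rule decay[where e=e and N=N, OF s rec \<epsilon>])
    then have "eventually (\<lambda>n. T - \<epsilon> \<le> cos (dist (xs n) u)) sequentially"
      by (rule eventually_mono) (auto simp: e_def \<alpha>_def)
    then have "T - \<epsilon> \<le> theta xs u" by (rule theta_ge)
    moreover have "theta xs u \<le> \<Theta>" unfolding \<Theta>_def by (rule qmax)
    ultimately show False using key by linarith
  qed
  then have "q \<in> Argmin f" unfolding u_def by (rule fix_argmin)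
  then show ?thesis by blast
qed

end


lemma cos_to_zero:
  fixes \<delta> :: "nat \<Rightarrow> real"
  assumes c: "(\<lambda>n. cos (\<delta> n)) \<longlonglongrightarrow> 1" and b: "\<And>n. 0 \<le> \<delta> n" "\<And>n. \<delta> n \<le> pi/2"
  shows "\<delta> \<longlonglongrightarrow> 0"
  unfolding tendsto_iff
proof (intro allI impI)
  fix e :: real assume e: "0 < e"
  define e' where "e' = min e 1"
  have e': "0 < e'" "e' \<le> e" "e' \<le> 1" using e unfolding e'_def by auto
  have "cos e' < cos 0" using e' pi_gt3 by (intro cos_monotone_0_pi) auto
  then have "cos e' < 1" by simp
  then have ev: "eventually (\<lambda>n. cos e' < cos (\<delta> n)) sequentially" using c by (intro order_tendstoD) auto
  show "eventually (\<lambda>n. dist (\<delta> n) 0 < e) sequentially" using ev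
  proof eventually_elim
    case (elim n)
    have "\<delta> n < e'" using elim b[of n] e' pi_gt3 by (subst (asm) cos_mono_less_eq) auto
    then show ?case using b[of n] e' by simp
  qed
qed

context ctx begin

lemma cos_dist_lip: "\<bar>cos (dist a z) - cos (dist b z)\<bar> \<le> dist a b"
proof -
  have "\<bar>cos (dist a z) - cos (dist b z)\<bar> \<le> \<bar>dist a z - dist b z\<bar>" by (rule cos_lip)
  also have "\<dots> \<le> dist a b"
  proof -
    have "dist a z \<le> dist a b + dist b z" by (rule dist_triangle)
    moreover have "dist b z \<le> dist b a + dist a z" by (rule dist_triangle)
    ultimately show ?thesis by (simp add: dist_commute abs_le_iff)
  qed
  finally show ?thesis .
qed

lemma orbit_facts:
  fixes x :: 'a
  defines "xs \<equiv> \<lambda>n. (R ^^ n) x"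
  assumes p: "p \<in> Argmin f"
  shows "\<And>n. cos (dist p x) \<le> cos (dist (xs (Suc n)) (xs n))"
    and "\<And>n. cos (dist p x) \<le> cos (dist (xs n) p)"
    and "(\<lambda>n. dist (xs (Suc n)) (xs n)) \<longlonglongrightarrow> 0"
    and "\<And>z. z \<in> Argmin f \<Longrightarrow> \<exists>L. (\<lambda>n. dist (xs n) z) \<longlonglongrightarrow> L"
proof -
  have xsS: "xs (Suc n) = R (xs n)" for n unfolding xs_def by simp
  have x0: "xs 0 = x" unfolding xs_def by simp
  define \<beta> where "\<beta> n = cos (dist (xs n) p)" for n
  define a where "a n = cos (dist (xs (Suc n)) (xs n))" for n
  have fe: "\<beta> n \<le> \<beta> (Suc n) * a n" for n
    using fejer[OF p, of "xs n"] unfolding \<beta>_def a_def xsS by (simp add: dist_commute)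
  have a1: "0 < a n" "a n \<le> 1" for n unfolding a_def using cpos by auto
  have b1: "0 < \<beta> n" "\<beta> n \<le> 1" for n unfolding \<beta>_def using cpos by auto
  have inc: "\<beta> n \<le> \<beta> (Suc n)" for n
  proof -
    have "\<beta> (Suc n) * a n \<le> \<beta> (Suc n)" using a1[of n] b1[of "Suc n"] by (intro mult_right_le_one_le) auto
    then show ?thesis using fe[of n] by linarith
  qed
  have incs: "incseq \<beta>" by (rule incseq_SucI) (rule inc)
  have bge: "\<beta> 0 \<le> \<beta> n" for n using incs unfolding incseq_def by simp
  have age: "\<beta> n \<le> a n" for n
  proof -
    have "\<beta> (Suc n) * a n \<le> a n" using a1[of n] b1[of "Suc n"] by (intro mult_left_le_one_le) auto
    then show ?thesis using fe[of n] by linarith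
  qed
  show "cos (dist p x) \<le> cos (dist (xs (Suc n)) (xs n))" for n
    using bge[of n] age[of n] unfolding \<beta>_def a_def x0[symmetric] by (simp add: dist_commute)
  show "cos (dist p x) \<le> cos (dist (xs n) p)" for n
    using bge[of n] unfolding \<beta>_def x0[symmetric] by (simp add: dist_commute)
  obtain l where l: "\<beta> \<longlonglongrightarrow> l" "\<forall>i. \<beta> i \<le> l" using incseq_convergent[OF incs, of 1] b1 by blast
  have lpos: "0 < l" using spec[OF l(2), of 0] b1(1)[of 0] by linarith
  have ratio: "(\<lambda>n. \<beta> n / \<beta> (Suc n)) \<longlonglongrightarrow> l / l"
    using lpos by (intro tendsto_divide l(1) LIMSEQ_Suc[OF l(1)]) auto
  have "a \<longlonglongrightarrow> 1"
  proof (rule tendsto_sandwich[of "\<lambda>n. \<beta> n / \<beta> (Suc n)" _ _ "\<lambda>_. 1"])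
    show "eventually (\<lambda>n. \<beta> n / \<beta> (Suc n) \<le> a n) sequentially"
      using fe b1 by (auto simp: divide_le_eq mult.commute intro!: always_eventually)
    show "eventually (\<lambda>n. a n \<le> 1) sequentially" using a1 by simp
    show "(\<lambda>n. \<beta> n / \<beta> (Suc n)) \<longlonglongrightarrow> 1" using ratio lpos by simp
  qed simp
  then show "(\<lambda>n. dist (xs (Suc n)) (xs n)) \<longlonglongrightarrow> 0"
    unfolding a_def
  proof (rule cos_to_zero)
    fix n show "0 \<le> dist (xs (Suc n)) (xs n)" by simp
    show "dist (xs (Suc n)) (xs n) \<le> pi / 2" by (rule less_imp_le[OF dlt])
  qed
  fix z assume z: "z \<in> Argmin f"
  have dec: "dist (xs (Suc n)) z \<le> dist (xs n) z" for n
  proof -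
    have "cos (dist z (xs n)) \<le> cos (dist (xs (Suc n)) z) * cos (dist (xs (Suc n)) (xs n))"
      using fejer[OF z, of "xs n"] unfolding xsS .
    also have "\<dots> \<le> cos (dist (xs (Suc n)) z)" using cpos[of "xs (Suc n)" z]
      by (intro mult_right_le_one_le) (auto intro: less_imp_le cpos)
    finally have "cos (dist (xs n) z) \<le> cos (dist (xs (Suc n)) z)" by (simp add: dist_commute)
    then show ?thesis using less_imp_le[OF dlt[of "xs n" z]] less_imp_le[OF dlt[of "xs (Suc n)" z]] pi_gt3
      by (subst (asm) cos_mono_le_eq) auto
  qed
  have "antimono_on UNIV (\<lambda>n. dist (xs n) z)" by (rule decseq_SucI) (rule dec)
  then obtain L where "(\<lambda>n. dist (xs n) z) \<longlonglongrightarrow> L"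
    using decseq_convergent[of "\<lambda>n. dist (xs n) z" 0] by auto
  then show "\<exists>L. (\<lambda>n. dist (xs n) z) \<longlonglongrightarrow> L" by blast
qed

end

context ctx begin

lemma center_in_F:
  fixes x :: 'a
  defines "xs \<equiv> \<lambda>n. (R ^^ n) x"
  assumes p: "p \<in> Argmin f" and r: "strict_mono r"
    and qmax: "\<And>z. theta (\<lambda>i. xs (r i)) z \<le> theta (\<lambda>i. xs (r i)) q"
    and qpos: "0 < theta (\<lambda>i. xs (r i)) q"
  shows "q \<in> Argmin f"
proof -
  have xsS: "xs (Suc n) = R (xs n)" for n unfolding xs_def by simp
  note ofc = orbit_facts[OF p, of x]
  define \<beta>0 where "\<beta>0 = cos (dist p x)"
  have \<beta>0: "0 < \<beta>0" unfolding \<beta>0_def by (rule cpos)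
  define u where "u = R q"
  have "u = q"
  proof (rule ccontr)
    assume ne: "u \<noteq> q"
    define a2 where "a2 = cos (dist u q)"
    have a2: "0 < a2" "a2 < 1"
    proof -
      show "0 < a2" unfolding a2_def by (rule cpos)
      have "0 < dist u q" using ne by simp
      then have "cos (dist u q) < cos 0" using half_pi_le[OF dlt[of u q]] by (intro cos_monotone_0_pi) auto
      then show "a2 < 1" unfolding a2_def by simp
    qed
    define w2 where "w2 = 1 + 1 / a2^2"
    have w2: "0 < w2" unfolding w2_def by (simp add: add_pos_nonneg)
    define W where "W = 1 + 1 / \<beta>0^2"
    define a1 where "a1 n = cos (dist (xs (Suc n)) (xs n))" for n
    define w1 where "w1 n = 1 + 1 / (a1 n)^2" for n
    have a1: "0 < a1 n" "a1 n \<le> 1" "\<beta>0 \<le> a1 n" for n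
    proof -
      show "0 < a1 n" "a1 n \<le> 1" unfolding a1_def using cpos by auto
      show "\<beta>0 \<le> a1 n" unfolding a1_def \<beta>0_def xs_def by (rule ofc(1))
    qed
    have w1: "0 < w1 n" "w1 n \<le> W" for n
    proof -
      show "0 < w1 n" unfolding w1_def by (simp add: add_pos_nonneg)
      have "\<beta>0^2 \<le> (a1 n)^2" using a1[of n] \<beta>0 by (intro power_mono) auto
      moreover have "0 < (a1 n)^2 * \<beta>0^2" using a1(1)[of n] \<beta>0 by simp
      ultimately have "1 / (a1 n)^2 \<le> 1 / \<beta>0^2" by (intro divide_left_mono) auto
      then show "w1 n \<le> W" unfolding w1_def W_def by simp
    qed
    define \<alpha> where "\<alpha> n = cos (dist (xs n) u)" for n
    define \<beta> where "\<beta> n = cos (dist (xs n) q)" for n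
    define \<delta> where "\<delta> n = dist (xs (Suc n)) (xs n)" for n
    have I: "w1 n * \<alpha> n + w2 * \<beta> (Suc n) \<le> \<alpha> (Suc n) * (w1 n + w2 * a2)" for n
    proof -
      have h: "w1 n * \<alpha> n + w2 * \<beta> (Suc n) \<le> \<alpha> (Suc n) * (w1 n * a1 n + w2 * a2)"
        using pair_ineq[of "xs n" q] unfolding xsS[symmetric] u_def[symmetric]
        unfolding w1_def a1_def \<alpha>_def \<beta>_def w2_def a2_def by (simp add: dist_commute)
      have pos: "0 < \<alpha> (Suc n)" unfolding \<alpha>_def by (rule cpos)
      show ?thesis
        using step_w[OF a1(1) pos a1(2) less_imp_le[OF a2(2)] less_imp_le[OF w1(1)] less_imp_le[OF w2] h] .
    qed
    have la: "\<bar>\<alpha> (Suc n) - \<alpha> n\<bar> \<le> \<delta> n" "\<bar>\<beta> (Suc n) - \<beta> n\<bar> \<le> \<delta> n" for n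
      unfolding \<alpha>_def \<beta>_def \<delta>_def by (rule cos_dist_lip)+
    define K where "K = (W + w2 + w2 * a2) / w2"
    have J: "\<beta> n \<le> a2 * \<alpha> n + K * \<delta> n" for n
    proof -
      have d0: "0 \<le> \<delta> n" unfolding \<delta>_def by simp
      have "w1 n * (\<alpha> (Suc n) - \<alpha> n) \<le> w1 n * \<bar>\<alpha> (Suc n) - \<alpha> n\<bar>"
        using w1(1)[of n] by (intro mult_left_mono) auto
      also have "\<dots> \<le> W * \<delta> n" using w1[of n] la(1)[of n] d0 by (intro mult_mono) auto
      finally have A: "w1 n * (\<alpha> (Suc n) - \<alpha> n) \<le> W * \<delta> n" .
      have B: "w2 * \<beta> (Suc n) - w2 * a2 * \<alpha> (Suc n) \<le> w1 n * (\<alpha> (Suc n) - \<alpha> n)"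
        using I[of n] by (simp add: algebra_simps)
      have "\<beta> n \<le> \<beta> (Suc n) + \<delta> n" using la(2)[of n] by (simp add: abs_le_iff)
      then have "w2 * \<beta> n \<le> w2 * (\<beta> (Suc n) + \<delta> n)" using w2 by (intro mult_left_mono) auto
      then have C1: "w2 * \<beta> n \<le> w2 * \<beta> (Suc n) + w2 * \<delta> n" by (simp add: distrib_left)
      have C2: "- (w2 * a2 * \<alpha> n) \<le> - (w2 * a2 * \<alpha> (Suc n)) + w2 * a2 * \<delta> n"
      proof -
        have "w2 * a2 * (\<alpha> (Suc n) - \<alpha> n) \<le> w2 * a2 * \<delta> n"
          using la(1)[of n] w2 a2 by (intro mult_left_mono) auto
        then show ?thesis by (simp add: algebra_simps)
      qed
      have "w2 * \<beta> n - w2 * a2 * \<alpha> n \<le> W * \<delta> n + w2 * \<delta> n + w2 * a2 * \<delta> n"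
        using A B C1 C2 by linarith
      also have "\<dots> = w2 * (K * \<delta> n)" unfolding K_def using w2 by (simp add: field_simps)
      finally have "w2 * \<beta> n \<le> w2 * (a2 * \<alpha> n + K * \<delta> n)" by (simp add: algebra_simps)
      then show ?thesis using w2 by simp
    qed
    have \<delta>0: "\<delta> \<longlonglongrightarrow> 0" unfolding \<delta>_def xs_def by (rule ofc(3))
    have "(\<delta> \<circ> r) \<longlonglongrightarrow> 0" by (rule LIMSEQ_subseq_LIMSEQ[OF \<delta>0 r])
    then have e0: "(\<lambda>i. K * \<delta> (r i)) \<longlonglongrightarrow> 0" unfolding o_def by (rule tendsto_mult_right_zero)
    have "1 * theta (\<lambda>i. xs (r i)) q + 0 * theta (\<lambda>i. xs (r i)) q \<le> a2 * theta (\<lambda>i. xs (r i)) u + 0"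
    proof (rule theta_lin[OF _ _ _ e0])
      show "eventually (\<lambda>i. 1 * cos (dist (xs (r i)) q) + 0 * cos (dist (xs (r i)) q)
          \<le> a2 * cos (dist (xs (r i)) u) + K * \<delta> (r i)) sequentially"
        using J unfolding \<alpha>_def \<beta>_def by simp
    qed (use a2 in auto)
    then have "theta (\<lambda>i. xs (r i)) q \<le> a2 * theta (\<lambda>i. xs (r i)) u" by simp
    also have "\<dots> \<le> a2 * theta (\<lambda>i. xs (r i)) q" using qmax[of u] a2 by (intro mult_left_mono) auto
    finally have "1 * theta (\<lambda>i. xs (r i)) q \<le> a2 * theta (\<lambda>i. xs (r i)) q" by simp
    then have "1 \<le> a2" using qpos by (simp add: mult_le_cancel_right)
    then show False using a2 by simp
  qed
  then show ?thesis unfolding u_def by (rule fix_argmin)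
qed

end

context ctx begin

lemma rho_lim:
  assumes "(\<lambda>n. dist (ys n) z) \<longlonglongrightarrow> L"
  shows "rho ys z = L"
proof -
  have "(\<lambda>n. ereal (dist (ys n) z)) \<longlonglongrightarrow> ereal L" by (rule tendsto_ereal[OF assms])
  then have "limsup (\<lambda>n. ereal (dist (ys n) z)) = ereal L" by (intro lim_imp_Limsup) auto
  then show ?thesis unfolding rho_def by simp
qed

lemma delta:
  fixes x :: 'a
  defines "xs \<equiv> \<lambda>n. (R ^^ n) x"
  assumes p: "p \<in> Argmin f"
  shows "\<exists>q\<in>Argmin f. Delta_convergent xs q"
proof -
  note ofc = orbit_facts[OF p, of x]
  define \<beta>0 where "\<beta>0 = cos (dist p x)"
  have \<beta>0: "0 < \<beta>0" unfolding \<beta>0_def by (rule cpos)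
  have thpos: "0 < theta (\<lambda>i. xs (r i)) p" for r
  proof -
    have "eventually (\<lambda>i. \<beta>0 \<le> cos (dist (xs (r i)) p)) sequentially"
      unfolding \<beta>0_def xs_def using ofc(2) by simp
    then have "\<beta>0 \<le> theta (\<lambda>i. xs (r i)) p" by (rule theta_ge)
    then show ?thesis using \<beta>0 by linarith
  qed
  have lim: "\<exists>L. (\<lambda>n. dist (xs n) z) \<longlonglongrightarrow> L" if "z \<in> Argmin f" for z
    unfolding xs_def by (rule orbit_facts(4)[OF p that])
  have rho_sub: "rho (\<lambda>i. xs (r i)) z = rho xs z" if z: "z \<in> Argmin f" and r: "strict_mono r" for z r
  proof -
    obtain L where L: "(\<lambda>n. dist (xs n) z) \<longlonglongrightarrow> L" using lim[OF z] by blast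
    have "((\<lambda>n. dist (xs n) z) \<circ> r) \<longlonglongrightarrow> L" by (rule LIMSEQ_subseq_LIMSEQ[OF L r])
    then have "(\<lambda>i. dist (xs (r i)) z) \<longlonglongrightarrow> L" by (simp add: o_def)
    then have "rho (\<lambda>i. xs (r i)) z = L" by (rule rho_lim)
    moreover have "rho xs z = L" by (rule rho_lim[OF L])
    ultimately show ?thesis by simp
  qed
  have id_mono: "strict_mono (\<lambda>i::nat. i)" by (simp add: strict_mono_def)
  obtain q where qmax: "\<And>z. theta xs z \<le> theta xs q" and quniq: "\<And>z. z \<noteq> q \<Longrightarrow> theta xs z < theta xs q"
    using asym_center[OF thpos[of "\<lambda>i. i"]] by auto
  have qF: "q \<in> Argmin f"
  proof (rule center_in_F[OF p id_mono])
    show "\<And>z. theta (\<lambda>i. (R ^^ i) x) z \<le> theta (\<lambda>i. (R ^^ i) x) q" using qmax unfolding xs_def .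
    show "0 < theta (\<lambda>i. (R ^^ i) x) q" using qmax[of p] thpos[of "\<lambda>i. i"] unfolding xs_def by simp
  qed
  show ?thesis
  proof (intro bexI[OF _ qF])
    show "Delta_convergent xs q" unfolding Delta_convergent_def
    proof (intro allI impI)
      fix r :: "nat \<Rightarrow> nat" and z assume r: "strict_mono r" and zq: "z \<noteq> q"
      define ys where "ys = (\<lambda>i. xs (r i))"
      obtain qr where qrmax: "\<And>z. theta ys z \<le> theta ys qr" and qruniq: "\<And>z. z \<noteq> qr \<Longrightarrow> theta ys z < theta ys qr"
        using asym_center[OF thpos[of r]] unfolding ys_def by auto
      have qrF: "qr \<in> Argmin f"
      proof (rule center_in_F[OF p r])
        show "\<And>z. theta (\<lambda>i. (R ^^ r i) x) z \<le> theta (\<lambda>i. (R ^^ r i) x) qr" using qrmax unfolding ys_def xs_def .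
        show "0 < theta (\<lambda>i. (R ^^ r i) x) qr" using qrmax[of p] thpos[of r] unfolding ys_def xs_def by simp
      qed
      have "theta ys q = theta xs q" unfolding theta_def ys_def using rho_sub[OF qF r] by simp
      moreover have "theta ys qr = theta xs qr" unfolding theta_def ys_def using rho_sub[OF qrF r] by simp
      ultimately have "theta ys qr \<le> theta ys q" using qmax[of qr] by simp
      then have "qr = q" using qruniq[of q] by (cases "qr = q") auto
      then have "theta ys z < theta ys q" using qruniq[OF zq[folded \<open>qr = q\<close>]] \<open>qr = q\<close> by simp
      then have lt: "rho ys q < rho ys z"
      proof -
        assume a: "theta ys z < theta ys q"
        show ?thesis
        proof (rule ccontr)
          assume "\<not> ?thesis"
          then have "cos (rho ys q) \<le> cos (rho ys z)"
            using rho_bd[of ys q] rho_bd[of ys z] by (intro cos_in) auto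
          then show False using a unfolding theta_def by simp
        qed
      qed
      show "limsup (\<lambda>i. ereal (dist (xs (r i)) q)) < limsup (\<lambda>i. ereal (dist (xs (r i)) z))"
        using lt limsup_rho[of ys q] limsup_rho[of ys z] unfolding ys_def by simp
    qed
  qed
qed

end


context ctx begin

lemma easy:
  assumes p: "p \<in> Argmin f"
  shows "spherically_bounded (\<lambda>n. (R ^^ n) p) \<and>
         (SUP n. ereal (dist ((R ^^ Suc n) p) ((R ^^ n) p))) < ereal (pi / 2)"
proof -
  have fx: "(R ^^ n) p = p" for n
    by (induction n) (simp_all add: argmin_fix[OF p])
  have "(INF y. limsup (\<lambda>n. ereal (dist ((R ^^ n) p) y))) \<le> limsup (\<lambda>n. ereal (dist ((R ^^ n) p) p))"
    by (rule INF_lower) simp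
  also have "\<dots> = 0" unfolding fx by (simp add: Limsup_const)
  finally have "spherically_bounded (\<lambda>n. (R ^^ n) p)"
    unfolding spherically_bounded_def using pi_gt_zero by (simp add: le_less_trans)
  moreover have "(SUP n. ereal (dist ((R ^^ Suc n) p) ((R ^^ n) p))) = 0"
    unfolding fx by simp
  ultimately show ?thesis using pi_gt_zero by simp
qed

end

theorem corollary4p8:
  fixes f :: "'a::metric_space \<Rightarrow> ereal"
  assumes "CAT1_space TYPE('a)" and "admissible TYPE('a)" and "complete (UNIV :: 'a set)"
    and "\<forall>x. f x \<noteq> -\<infinity>" and "proper_fun f" and "lsc f" and "geod_convex f"
  shows "(Argmin f \<noteq> {} \<longleftrightarrow>
           (\<exists>x. spherically_bounded (\<lambda>n. (resolvent f ^^ n) x) \<and>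
                (SUP n. ereal (dist ((resolvent f ^^ Suc n) x) ((resolvent f ^^ n) x))) < ereal (pi / 2)))
       \<and> (Argmin f \<noteq> {} \<longrightarrow>
           (\<forall>x. \<exists>p \<in> Argmin f. Delta_convergent (\<lambda>n. (resolvent f ^^ n) x) p))"
proof -
  interpret ctx f using assms by (unfold_locales) auto
  show ?thesis
  proof (intro conjI impI allI iffI)
    assume "Argmin f \<noteq> {}"
    then obtain p where p: "p \<in> Argmin f" by blast
    show "\<exists>x. spherically_bounded (\<lambda>n. (resolvent f ^^ n) x) \<and>
        (SUP n. ereal (dist ((resolvent f ^^ Suc n) x) ((resolvent f ^^ n) x))) < ereal (pi / 2)"
      using easy[OF p] by blast
  next
    assume "\<exists>x. spherically_bounded (\<lambda>n. (resolvent f ^^ n) x) \<and>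
        (SUP n. ereal (dist ((resolvent f ^^ Suc n) x) ((resolvent f ^^ n) x))) < ereal (pi / 2)"
    then obtain x where "spherically_bounded (\<lambda>n. (resolvent f ^^ n) x)"
      "(SUP n. ereal (dist ((resolvent f ^^ Suc n) x) ((resolvent f ^^ n) x))) < ereal (pi / 2)" by blast
    then show "Argmin f \<noteq> {}" by (intro hard) auto
  next
    fix x assume "Argmin f \<noteq> {}"
    then obtain p where p: "p \<in> Argmin f" by blast
    show "\<exists>p\<in>Argmin f. Delta_convergent (\<lambda>n. (resolvent f ^^ n) x) p" by (rule delta[OF p])
  qed
qed


end
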